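(* For every $n\ge 0$, the numbers $\big(\mathbb{E}[\xi_n(p)^2]\big)_{p\in\{0,x,y,z\}^N}$ form a probability distribution on $\{0,x,y,z\}^N$, and for every $p\in\{0,x,y,z\}^N$, $$\mathbb{E}[\xi_{n+1}(p)^2]=\sum_{q\in\{0,x,y,z\}^N}P(q,p)\,\mathbb{E}[\xi_n(q)^2],$$ where $$P(q,p)=\frac{1}{N(N-1)}\sum_{(c,t)}\ w(q_c,\hat p_c)\,w(q_t,\hat p_t)\prod_{i\notin\{c,t\}}\delta_{q_i,p_i},$$ the sum running over all ordered pairs $(c,t)$ of distinct indices in $\{1,\dots,N\}$. In fact, conditionally on $|\psi_n\rangle$ and on the chosen pair $(c,t)$ of the $(n+1)$-st gate, $\mathbb{E}[\xi_{n+1}(p)^2\mid \psi_n,c,t]=\sum_q w(q_c,\hat p_c)w(q_t,\hat p_t)\prod_{i\notin\{c,t\}}\delta_{q_i,p_i}\,\xi_n(q)^2$.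
   Context: Random circuit: $C_n=W_n\cdots W_1$ on $N\ge 2$ qubits, where the $W_i$ are i.i.d.: an ordered pair $(c,t)$ of distinct indices in $\{1,\dots,N\}$ is chosen uniformly at random; independently $U,V$ are Haar-random in $U(2)$; $W=\mathrm{CNOT}[c,t]\,U[c]\,V[t]$ ($U$ acting on qubit $c$, $V$ on qubit $t$, CNOT with control $c$ and target $t$). $|\psi_n\rangle=C_n|\psi_0\rangle$ for an arbitrary initial pure state $|\psi_0\rangle$. Pauli notation: $\sigma^0=I$, $\sigma^x,\sigma^y,\sigma^z$ the Pauli matrices, $\sigma^{p_i}[i]$ the Pauli acting on qubit $i$; for $p\in\{0,x,y,z\}^N$, $\xi_n(p)=2^{-N/2}\,\mathrm{Tr}\big(\bigotimes_{i=1}^N\sigma^{p_i}[i]\,|\psi_n\rangle\langle\psi_n|\big)$, so that $|\psi_n\rangle\langle\psi_n|=\sum_p \xi_n(p)2^{-N/2}\bigotimes_i\sigma^{p_i}[i]$. For given $(c,t)$ and $p$, $(\hat p_c,\hat p_t)\in\{0,x,y,z\}^2$ is the unique pair with $\mathrm{CNOT}[c,t]\,\sigma^{p_c}[c]\sigma^{p_t}[t]\,\mathrm{CNOT}[c,t]=\pm\sigma^{\hat p_c}[c]\sigma^{\hat p_t}[t]$. The weight $w:\{0,x,y,z\}^2\to\mathbb{R}$ is $w(0,0)=1$, $w(a,b)=1/3$ if $a\ne0$ and $b\ne 0$, and $w(a,b)=0$ if exactly one of $a,b$ is $0$. $\delta$ is the Kronecker delta. *)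

theory Defs
  imports "HOL-Probability.Probability"
begin

text \<open>Computational basis states of N qubits are
  bit assignments b :: nat => bool that are False outside {1..N}
  (False = |0>, True = |1>).\<close>

definition bits :: "nat \<Rightarrow> (nat \<Rightarrow> bool) set" where
  "bits N = {b. \<forall>i. i \<notin> {1..N} \<longrightarrow> \<not> b i}"

type_synonym state = "(nat \<Rightarrow> bool) \<Rightarrow> complex"
type_synonym op = "(nat \<Rightarrow> bool) \<Rightarrow> (nat \<Rightarrow> bool) \<Rightarrow> complex"

definition normalized :: "nat \<Rightarrow> state \<Rightarrow> bool" where
  "normalized N \<psi> \<longleftrightarrow> (\<Sum>b\<in>bits N. (cmod (\<psi> b))\<^sup>2) = 1"

definition op_mult :: "nat \<Rightarrow> op \<Rightarrow> op \<Rightarrow> op" where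
  "op_mult N A B = (\<lambda>b b'. \<Sum>b''\<in>bits N. A b b'' * B b'' b')"

definition mat_vec :: "nat \<Rightarrow> op \<Rightarrow> state \<Rightarrow> state" where
  "mat_vec N M \<psi> = (\<lambda>b. \<Sum>b'\<in>bits N. M b b' * \<psi> b')"

datatype pauli = P0 | PX | PY | PZ

text \<open>Single-qubit Pauli matrix entries, row index first.\<close>
fun sigma :: "pauli \<Rightarrow> bool \<Rightarrow> bool \<Rightarrow> complex" where
  "sigma P0 r s = (if r = s then 1 else 0)"
| "sigma PX r s = (if r \<noteq> s then 1 else 0)"
| "sigma PY r s = (if r = s then 0 else if r then \<i> else - \<i>)"
| "sigma PZ r s = (if r = s then (if r then -1 else 1) else 0)"

definition paulis :: "nat \<Rightarrow> (nat \<Rightarrow> pauli) set" where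
  "paulis N = {p. \<forall>i. i \<notin> {1..N} \<longrightarrow> p i = P0}"

definition pauli_op :: "nat \<Rightarrow> (nat \<Rightarrow> pauli) \<Rightarrow> op" where
  "pauli_op N p = (\<lambda>b b'. \<Prod>i\<in>{1..N}. sigma (p i) (b i) (b' i))"

text \<open>xi_n(p) = 2^(-N/2) Tr(P |psi><psi|); this trace is real (P Hermitian),
  we take its real part.\<close>
definition xi :: "nat \<Rightarrow> (nat \<Rightarrow> pauli) \<Rightarrow> state \<Rightarrow> real" where
  "xi N p \<psi> = 2 powr (- real N / 2) *
     Re (\<Sum>b\<in>bits N. \<Sum>b'\<in>bits N. pauli_op N p b b' * (\<psi> b' * cnj (\<psi> b)))"

type_synonym mat2 = "complex ^ bool ^ bool"

definition cadj :: "mat2 \<Rightarrow> mat2" where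
  "cadj A = (\<chi> i j. cnj (A $ j $ i))"

definition unitary2 :: "mat2 \<Rightarrow> bool" where
  "unitary2 A \<longleftrightarrow> A ** cadj A = mat 1"

text \<open>Haar measure on U(2): a Borel probability measure concentrated on the
  unitary matrices and invariant under left multiplication by unitaries
  (unique, so quantifying over such measures is the same as taking Haar).\<close>
definition is_haar :: "mat2 measure \<Rightarrow> bool" where
  "is_haar \<mu> \<longleftrightarrow> prob_space \<mu> \<and> sets \<mu> = sets borel \<and> (AE U in \<mu>. unitary2 U) \<and>
     (\<forall>G. unitary2 G \<longrightarrow> distr \<mu> borel (\<lambda>U. G ** U) = \<mu>)"

definition single_op :: "nat \<Rightarrow> nat \<Rightarrow> mat2 \<Rightarrow> op" where
  "single_op N i A = (\<lambda>b b'. A $ b i $ b' i *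
      (if \<forall>j\<in>{1..N} - {i}. b j = b' j then 1 else 0))"

definition cnot_op :: "nat \<Rightarrow> nat \<Rightarrow> op" where
  "cnot_op c t = (\<lambda>b b'. if b = b'(t := (b' t \<noteq> b' c)) then 1 else 0)"

definition gate_op :: "nat \<Rightarrow> nat \<Rightarrow> nat \<Rightarrow> mat2 \<Rightarrow> mat2 \<Rightarrow> op" where
  "gate_op N c t U V = op_mult N (cnot_op c t) (op_mult N (single_op N c U) (single_op N t V))"

definition pairs :: "nat \<Rightarrow> (nat \<times> nat) set" where
  "pairs N = {(c, t). c \<in> {1..N} \<and> t \<in> {1..N} \<and> c \<noteq> t}"

type_synonym gate = "(nat \<times> nat) \<times> mat2 \<times> mat2"

definition gateM :: "nat \<Rightarrow> mat2 measure \<Rightarrow> gate measure" where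
  "gateM N \<mu> = measure_pmf (pmf_of_set (pairs N)) \<Otimes>\<^sub>M (\<mu> \<Otimes>\<^sub>M \<mu>)"

text \<open>i.i.d. sequence of gates W_1, W_2, ... (omega k is W_(k+1)).\<close>
definition circM :: "nat \<Rightarrow> mat2 measure \<Rightarrow> (nat \<Rightarrow> gate) measure" where
  "circM N \<mu> = PiM UNIV (\<lambda>_. gateM N \<mu>)"

definition apply_gate :: "nat \<Rightarrow> gate \<Rightarrow> state \<Rightarrow> state" where
  "apply_gate N g \<psi> = mat_vec N (gate_op N (fst (fst g)) (snd (fst g)) (fst (snd g)) (snd (snd g))) \<psi>"

fun psi :: "nat \<Rightarrow> state \<Rightarrow> (nat \<Rightarrow> gate) \<Rightarrow> nat \<Rightarrow> state" where
  "psi N \<psi>0 \<omega> 0 = \<psi>0"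
| "psi N \<psi>0 \<omega> (Suc n) = apply_gate N (\<omega> n) (psi N \<psi>0 \<omega> n)"

definition Exi2 :: "nat \<Rightarrow> mat2 measure \<Rightarrow> state \<Rightarrow> nat \<Rightarrow> (nat \<Rightarrow> pauli) \<Rightarrow> real" where
  "Exi2 N \<mu> \<psi>0 n p = (\<integral>\<omega>. (xi N p (psi N \<psi>0 \<omega> n))\<^sup>2 \<partial>circM N \<mu>)"

definition wt :: "pauli \<Rightarrow> pauli \<Rightarrow> real" where
  "wt a b = (if a = P0 \<and> b = P0 then 1 else if a \<noteq> P0 \<and> b \<noteq> P0 then 1/3 else 0)"

definition two_pauli :: "nat \<Rightarrow> nat \<Rightarrow> pauli \<Rightarrow> pauli \<Rightarrow> (nat \<Rightarrow> pauli)" where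
  "two_pauli c t a b = (\<lambda>i. if i = c then a else if i = t then b else P0)"

definition phat :: "nat \<Rightarrow> nat \<Rightarrow> nat \<Rightarrow> (nat \<Rightarrow> pauli) \<Rightarrow> pauli \<times> pauli" where
  "phat N c t p = (THE ab. \<exists>s\<in>{1, -1::complex}. \<forall>b\<in>bits N. \<forall>b'\<in>bits N.
     op_mult N (op_mult N (cnot_op c t) (pauli_op N (two_pauli c t (p c) (p t)))) (cnot_op c t) b b'
       = s * pauli_op N (two_pauli c t (fst ab) (snd ab)) b b')"

definition kron :: "pauli \<Rightarrow> pauli \<Rightarrow> real" where
  "kron a b = (if a = b then 1 else 0)"

definition Pct :: "nat \<Rightarrow> nat \<Rightarrow> nat \<Rightarrow> (nat \<Rightarrow> pauli) \<Rightarrow> (nat \<Rightarrow> pauli) \<Rightarrow> real" where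
  "Pct N c t q p = wt (q c) (fst (phat N c t p)) * wt (q t) (snd (phat N c t p)) *
     (\<Prod>i\<in>{1..N} - {c, t}. kron (q i) (p i))"

definition Ptrans :: "nat \<Rightarrow> (nat \<Rightarrow> pauli) \<Rightarrow> (nat \<Rightarrow> pauli) \<Rightarrow> real" where
  "Ptrans N q p = 1 / (real N * (real N - 1)) * (\<Sum>(c, t)\<in>pairs N. Pct N c t q p)"

end

theory Submission
  imports Defs
begin

lemma UNIV_pauli: "(UNIV::pauli set) = {P0,PX,PY,PZ}"
  using pauli.exhaust by auto

instance pauli :: finite
  by standard (simp add: UNIV_pauli)

lemma sum_pauli: "(\<Sum>a\<in>UNIV. f a) = f P0 + f PX + f PY + f PZ"
  by (simp add: UNIV_pauli ac_simps)

lemma sum_bool: "(\<Sum>x\<in>(UNIV::bool set). f x) = f False + f True"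
  by (simp add: UNIV_bool)

definition Ucon :: "mat2 \<Rightarrow> pauli \<Rightarrow> bool \<Rightarrow> bool \<Rightarrow> complex" where
  "Ucon U a i j = (\<Sum>k\<in>UNIV. \<Sum>l\<in>UNIV. cnj (U$k$i) * sigma a k l * U$l$j)"

definition Rc :: "mat2 \<Rightarrow> pauli \<Rightarrow> pauli \<Rightarrow> complex" where
  "Rc U a b = (\<Sum>i\<in>UNIV. \<Sum>j\<in>UNIV. sigma b j i * Ucon U a i j) / 2"

definition K2 :: "pauli \<Rightarrow> pauli \<Rightarrow> (bool \<Rightarrow> bool \<Rightarrow> complex) \<Rightarrow> (bool \<Rightarrow> bool \<Rightarrow> complex) \<Rightarrow> complex" where
  "K2 a a' \<phi> ch = (\<Sum>x\<in>UNIV. \<Sum>y\<in>UNIV. \<Sum>x'\<in>UNIV. \<Sum>y'\<in>UNIV. sigma a x x' * sigma a' y y' * \<phi> x' y' * cnj (ch x y))"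

definition Gm :: "mat2 \<Rightarrow> mat2 \<Rightarrow> bool \<Rightarrow> bool \<Rightarrow> bool \<Rightarrow> bool \<Rightarrow> complex" where
  "Gm U V x y x' y' = U$x$x' * V$(y \<noteq> x)$y'"

definition Gv :: "mat2 \<Rightarrow> mat2 \<Rightarrow> (bool \<Rightarrow> bool \<Rightarrow> complex) \<Rightarrow> (bool \<Rightarrow> bool \<Rightarrow> complex)" where
  "Gv U V \<phi> = (\<lambda>x y. \<Sum>x'\<in>UNIV. \<Sum>y'\<in>UNIV. Gm U V x y x' y' * \<phi> x' y')"

fun phf :: "pauli \<Rightarrow> pauli \<Rightarrow> pauli \<times> pauli" where
  "phf P0 P0 = (P0, P0)" | "phf P0 PX = (P0, PX)" | "phf P0 PY = (PZ, PY)" | "phf P0 PZ = (PZ, PZ)"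
| "phf PX P0 = (PX, PX)" | "phf PX PX = (PX, P0)" | "phf PX PY = (PY, PZ)" | "phf PX PZ = (PY, PY)"
| "phf PY P0 = (PY, PX)" | "phf PY PX = (PY, P0)" | "phf PY PY = (PX, PZ)" | "phf PY PZ = (PX, PY)"
| "phf PZ P0 = (PZ, P0)" | "phf PZ PX = (PZ, PX)" | "phf PZ PY = (P0, PY)" | "phf PZ PZ = (P0, PZ)"

fun sgf :: "pauli \<Rightarrow> pauli \<Rightarrow> complex" where
  "sgf PX PZ = -1" | "sgf PY PY = -1" | "sgf _ _ = 1"

lemma sigma_cnj: "cnj (sigma a k l) = sigma a l k"
  by (cases a) auto

lemma completeness2: "A x x' = (\<Sum>b\<in>UNIV. ((\<Sum>i\<in>UNIV. \<Sum>j\<in>UNIV. sigma b j i * A i j) / 2) * sigma b x x')"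
  by (cases x; cases x') (simp_all add: sum_pauli sum_bool field_simps)

lemma Ucon_comp: "Ucon U a x x' = (\<Sum>b\<in>UNIV. Rc U a b * sigma b x x')"
  unfolding Rc_def by (rule completeness2)

lemma Rc_real: "cnj (Rc U a b) = Rc U a b"
  unfolding Rc_def Ucon_def
  by (simp add: sum_bool sigma_cnj algebra_simps)

lemma cnot_table: "sigma a x1 x2 * sigma a' (y1 \<noteq> x1) (y2 \<noteq> x2) = sgf a a' * sigma (fst (phf a a')) x1 x2 * sigma (snd (phf a a')) y1 y2"
  by (cases a; cases a'; cases x1; cases x2; cases y1; cases y2) auto

lemma Hconj: "(\<Sum>x1\<in>UNIV. \<Sum>y1\<in>UNIV. \<Sum>x2\<in>UNIV. \<Sum>y2\<in>UNIV.
      cnj (Gm U V x1 y1 x y) * (sigma a x1 x2 * sigma a' y1 y2) * Gm U V x2 y2 x' y')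
   = sgf a a' * Ucon U (fst (phf a a')) x x' * Ucon V (snd (phf a a')) y y'"
proof -
  have "(\<Sum>x1\<in>UNIV. \<Sum>y1\<in>UNIV. \<Sum>x2\<in>UNIV. \<Sum>y2\<in>UNIV.
      cnj (Gm U V x1 y1 x y) * (sigma a x1 x2 * sigma a' y1 y2) * Gm U V x2 y2 x' y')
    = (\<Sum>x1\<in>UNIV. \<Sum>z1\<in>UNIV. \<Sum>x2\<in>UNIV. \<Sum>z2\<in>UNIV.
      cnj (U$x1$x) * cnj (V$z1$y) * (sigma a x1 x2 * sigma a' (z1 \<noteq> x1) (z2 \<noteq> x2)) * (U$x2$x' * V$z2$y'))"
    by (simp add: sum_bool Gm_def algebra_simps)
  also have "\<dots> = (\<Sum>x1\<in>UNIV. \<Sum>z1\<in>UNIV. \<Sum>x2\<in>UNIV. \<Sum>z2\<in>UNIV.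
      cnj (U$x1$x) * cnj (V$z1$y) * (sgf a a' * sigma (fst (phf a a')) x1 x2 * sigma (snd (phf a a')) z1 z2) * (U$x2$x' * V$z2$y'))"
    by (simp only: cnot_table)
  also have "\<dots> = sgf a a' * Ucon U (fst (phf a a')) x x' * Ucon V (snd (phf a a')) y y'"
    unfolding Ucon_def by (simp add: sum_bool algebra_simps)
  finally show ?thesis .
qed

lemma K2_rearr:
  fixes g :: "bool \<Rightarrow> bool \<Rightarrow> bool \<Rightarrow> bool \<Rightarrow> complex"
  shows "(\<Sum>x1\<in>UNIV. \<Sum>y1\<in>UNIV. \<Sum>x2\<in>UNIV. \<Sum>y2\<in>UNIV. m x1 y1 x2 y2 *
      (\<Sum>x'\<in>UNIV. \<Sum>y'\<in>UNIV. g x2 y2 x' y' * \<phi> x' y') * cnj (\<Sum>x\<in>UNIV. \<Sum>y\<in>UNIV. g x1 y1 x y * ch x y))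
   = (\<Sum>x\<in>UNIV. \<Sum>y\<in>UNIV. \<Sum>x'\<in>UNIV. \<Sum>y'\<in>UNIV.
       (\<Sum>x1\<in>UNIV. \<Sum>y1\<in>UNIV. \<Sum>x2\<in>UNIV. \<Sum>y2\<in>UNIV. cnj (g x1 y1 x y) * m x1 y1 x2 y2 * g x2 y2 x' y') * \<phi> x' y' * cnj (ch x y))"
  by (simp add: sum_bool algebra_simps)

lemma K2_gate: "K2 a a' (Gv U V \<phi>) (Gv U V ch) =
   sgf a a' * (\<Sum>b\<in>UNIV. \<Sum>b'\<in>UNIV. Rc U (fst (phf a a')) b * Rc V (snd (phf a a')) b' * K2 b b' \<phi> ch)"
proof -
  have "K2 a a' (Gv U V \<phi>) (Gv U V ch) = (\<Sum>x\<in>UNIV. \<Sum>y\<in>UNIV. \<Sum>x'\<in>UNIV. \<Sum>y'\<in>UNIV.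
       (\<Sum>x1\<in>UNIV. \<Sum>y1\<in>UNIV. \<Sum>x2\<in>UNIV. \<Sum>y2\<in>UNIV.
      cnj (Gm U V x1 y1 x y) * (sigma a x1 x2 * sigma a' y1 y2) * Gm U V x2 y2 x' y') * \<phi> x' y' * cnj (ch x y))"
    unfolding K2_def Gv_def by (rule K2_rearr)
  also have "\<dots> = (\<Sum>x\<in>UNIV. \<Sum>y\<in>UNIV. \<Sum>x'\<in>UNIV. \<Sum>y'\<in>UNIV.
       (sgf a a' * Ucon U (fst (phf a a')) x x' * Ucon V (snd (phf a a')) y y') * \<phi> x' y' * cnj (ch x y))"
    by (simp only: Hconj)
  also have "\<dots> = sgf a a' * (\<Sum>b\<in>UNIV. \<Sum>b'\<in>UNIV. Rc U (fst (phf a a')) b * Rc V (snd (phf a a')) b' * K2 b b' \<phi> ch)"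
    unfolding Ucon_comp K2_def
    by (simp add: sum_bool sum_pauli algebra_simps)
  finally show ?thesis .
qed



definition R0 :: "nat \<Rightarrow> nat \<Rightarrow> nat \<Rightarrow> (nat \<Rightarrow> bool) set" where
  "R0 N c t = {r \<in> bits N. \<not> r c \<and> \<not> r t}"

definition ext :: "nat \<Rightarrow> nat \<Rightarrow> (nat \<Rightarrow> bool) \<Rightarrow> bool \<Rightarrow> bool \<Rightarrow> (nat \<Rightarrow> bool)" where
  "ext c t r x y = r(c := x, t := y)"

lemma finite_bits: "finite (bits N)"
proof (rule finite_subset)
  show "bits N \<subseteq> (\<lambda>S i. i \<in> S) ` Pow {1..N}"
  proof
    fix b assume "b \<in> bits N"
    then have "b = (\<lambda>i. i \<in> {i. b i})" "{i. b i} \<in> Pow {1..N}" by (auto simp: bits_def)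
    then show "b \<in> (\<lambda>S i. i \<in> S) ` Pow {1..N}" by blast
  qed
qed auto

lemma finite_R0: "finite (R0 N c t)"
  using finite_bits unfolding R0_def by auto

lemma ext_bits: "r \<in> R0 N c t \<Longrightarrow> c \<in> {1..N} \<Longrightarrow> t \<in> {1..N} \<Longrightarrow> ext c t r x y \<in> bits N"
  by (auto simp: R0_def ext_def bits_def)

lemma bits_sum:
  assumes "c \<in> {1..N}" "t \<in> {1..N}" "c \<noteq> t"
  shows "(\<Sum>b\<in>bits N. f b) = (\<Sum>r\<in>R0 N c t. \<Sum>x\<in>UNIV. \<Sum>y\<in>UNIV. f (ext c t r x y))"
proof -
  have bij: "bij_betw (\<lambda>(r,x,y). ext c t r x y) (R0 N c t \<times> UNIV \<times> UNIV) (bits N)"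
    apply (rule bij_betwI[where g = "\<lambda>b. (b(c:=False,t:=False), b c, b t)"])
    using assms apply (auto simp: R0_def ext_def bits_def fun_eq_iff)
    done
  have "(\<Sum>b\<in>bits N. f b) = (\<Sum>z\<in>R0 N c t \<times> UNIV \<times> UNIV. f ((\<lambda>(r,x,y). ext c t r x y) z))"
    using sum.reindex_bij_betw[OF bij, of f] by simp
  also have "\<dots> = (\<Sum>r\<in>R0 N c t. \<Sum>x\<in>UNIV. \<Sum>y\<in>UNIV. f (ext c t r x y))"
    unfolding sum.cartesian_product' by (simp add: UNIV_Times_UNIV[symmetric] sum.cartesian_product' del: UNIV_Times_UNIV)
  finally show ?thesis .
qed

lemma ext_eq_iff:
  assumes "r \<in> R0 N c t" "r' \<in> R0 N c t" "c \<noteq> t"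
  shows "ext c t r x y = ext c t r' x' y' \<longleftrightarrow> r = r' \<and> x = x' \<and> y = y'"
proof
  assume h: "ext c t r x y = ext c t r' x' y'"
  have "x = x'" using fun_cong[OF h, of c] assms(3) by (simp add: ext_def)
  moreover have "y = y'" using fun_cong[OF h, of t] by (simp add: ext_def)
  moreover have "r = r'"
  proof
    fix i show "r i = r' i"
      using fun_cong[OF h, of i] assms by (cases "i = c \<or> i = t") (auto simp: ext_def R0_def)
  qed
  ultimately show "r = r' \<and> x = x' \<and> y = y'" by simp
qed (simp)

lemma R0_agree:
  assumes "r \<in> R0 N c t" "r' \<in> R0 N c t"
  shows "(\<forall>j\<in>{1..N} - {c, t}. r j = r' j) \<longleftrightarrow> r = r'"
proof
  assume h: "\<forall>j\<in>{1..N} - {c, t}. r j = r' j"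
  show "r = r'"
  proof
    fix i show "r i = r' i"
      using h assms by (cases "i \<in> {1..N}"; cases "i = c \<or> i = t") (auto simp: R0_def bits_def)
  qed
qed simp



definition block :: "nat \<Rightarrow> nat \<Rightarrow> nat \<Rightarrow> op \<Rightarrow> (bool \<Rightarrow> bool \<Rightarrow> bool \<Rightarrow> bool \<Rightarrow> complex) \<Rightarrow> bool" where
  "block N c t A a \<longleftrightarrow> (\<forall>r\<in>R0 N c t. \<forall>r'\<in>R0 N c t. \<forall>x y x' y'.
      A (ext c t r x y) (ext c t r' x' y') = (if r = r' then a x y x' y' else 0))"

locale ctN =
  fixes N c t :: nat
  assumes c: "c \<in> {1..N}" and t: "t \<in> {1..N}" and ct: "c \<noteq> t"
begin

lemma bsum: "(\<Sum>b\<in>bits N. f b) = (\<Sum>r\<in>R0 N c t. \<Sum>x\<in>UNIV. \<Sum>y\<in>UNIV. f (ext c t r x y))"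
  by (rule bits_sum[OF c t ct])

lemma block_mult:
  assumes A: "block N c t A a" and B: "block N c t B b"
  shows "block N c t (op_mult N A B) (\<lambda>x y x' y'. \<Sum>x''\<in>UNIV. \<Sum>y''\<in>UNIV. a x y x'' y'' * b x'' y'' x' y')"
  unfolding block_def
proof (intro ballI allI)
  fix r r' x y x' y' assume r: "r \<in> R0 N c t" and r': "r' \<in> R0 N c t"
  have "op_mult N A B (ext c t r x y) (ext c t r' x' y') =
     (\<Sum>r''\<in>R0 N c t. \<Sum>x''\<in>UNIV. \<Sum>y''\<in>UNIV. A (ext c t r x y) (ext c t r'' x'' y'') * B (ext c t r'' x'' y'') (ext c t r' x' y'))"
    unfolding op_mult_def by (rule bsum)
  also have "\<dots> = (\<Sum>r''\<in>R0 N c t. if r'' = r then (if r = r' then (\<Sum>x''\<in>UNIV. \<Sum>y''\<in>UNIV. a x y x'' y'' * b x'' y'' x' y') else 0) else 0)"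
    apply (rule sum.cong[OF refl])
    using A B r r' unfolding block_def by auto
  also have "\<dots> = (if r = r' then (\<Sum>x''\<in>UNIV. \<Sum>y''\<in>UNIV. a x y x'' y'' * b x'' y'' x' y') else 0)"
    using r by (simp add: sum.delta' finite_R0)
  finally show "op_mult N A B (ext c t r x y) (ext c t r' x' y') = (if r = r' then (\<Sum>x''\<in>UNIV. \<Sum>y''\<in>UNIV. a x y x'' y'' * b x'' y'' x' y') else 0)" .
qed

lemma block_mat_vec:
  assumes A: "block N c t A a" and r: "r \<in> R0 N c t"
  shows "mat_vec N A \<psi> (ext c t r x y) = (\<Sum>x'\<in>UNIV. \<Sum>y'\<in>UNIV. a x y x' y' * \<psi> (ext c t r x' y'))"
proof -
  have "mat_vec N A \<psi> (ext c t r x y) = (\<Sum>r'\<in>R0 N c t. \<Sum>x'\<in>UNIV. \<Sum>y'\<in>UNIV. A (ext c t r x y) (ext c t r' x' y') * \<psi> (ext c t r' x' y'))"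
    unfolding mat_vec_def by (rule bsum)
  also have "\<dots> = (\<Sum>r'\<in>R0 N c t. if r' = r then (\<Sum>x'\<in>UNIV. \<Sum>y'\<in>UNIV. a x y x' y' * \<psi> (ext c t r x' y')) else 0)"
    apply (rule sum.cong[OF refl])
    using A r unfolding block_def by auto
  also have "\<dots> = (\<Sum>x'\<in>UNIV. \<Sum>y'\<in>UNIV. a x y x' y' * \<psi> (ext c t r x' y'))"
    using r by (simp add: sum.delta' finite_R0)
  finally show ?thesis .
qed

lemma ext_c[simp]: "ext c t r x y c = x" using ct by (simp add: ext_def)
lemma ext_t[simp]: "ext c t r x y t = y" by (simp add: ext_def)
lemma ext_o[simp]: "i \<noteq> c \<Longrightarrow> i \<noteq> t \<Longrightarrow> ext c t r x y i = r i" by (simp add: ext_def)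

lemma single_c_cond:
  assumes r: "r \<in> R0 N c t" and r': "r' \<in> R0 N c t"
  shows "(\<forall>j\<in>{1..N} - {c}. ext c t r x y j = ext c t r' x' y' j) \<longleftrightarrow> r = r' \<and> y = y'"
proof
  assume h: "\<forall>j\<in>{1..N} - {c}. ext c t r x y j = ext c t r' x' y' j"
  have "y = y'" using h t ct by (metis Diff_iff ext_t singletonD)
  moreover have "\<forall>j\<in>{1..N} - {c, t}. r j = r' j"
  proof
    fix j assume j: "j \<in> {1..N} - {c, t}"
    then have j1: "j \<in> {1..N} - {c}" "j \<in> {1..N} - {t}" by auto
    have "ext c t r x y j = ext c t r' x' y' j" by (rule bspec[OF h]) (use j1 in simp)
    then show "r j = r' j" using j by simp
  qed
  ultimately show "r = r' \<and> y = y'" using R0_agree[OF r r'] by simp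
next
  assume "r = r' \<and> y = y'" then show "\<forall>j\<in>{1..N} - {c}. ext c t r x y j = ext c t r' x' y' j"
    by (auto simp: ext_def)
qed

lemma single_t_cond:
  assumes r: "r \<in> R0 N c t" and r': "r' \<in> R0 N c t"
  shows "(\<forall>j\<in>{1..N} - {t}. ext c t r x y j = ext c t r' x' y' j) \<longleftrightarrow> r = r' \<and> x = x'"
proof
  assume h: "\<forall>j\<in>{1..N} - {t}. ext c t r x y j = ext c t r' x' y' j"
  have "x = x'" using h c ct by (metis Diff_iff ext_c singletonD)
  moreover have "\<forall>j\<in>{1..N} - {c, t}. r j = r' j"
  proof
    fix j assume j: "j \<in> {1..N} - {c, t}"
    then have j1: "j \<in> {1..N} - {c}" "j \<in> {1..N} - {t}" by auto
    have "ext c t r x y j = ext c t r' x' y' j" by (rule bspec[OF h]) (use j1 in simp)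
    then show "r j = r' j" using j by simp
  qed
  ultimately show "r = r' \<and> x = x'" using R0_agree[OF r r'] by simp
next
  assume "r = r' \<and> x = x'" then show "\<forall>j\<in>{1..N} - {t}. ext c t r x y j = ext c t r' x' y' j"
    by (auto simp: ext_def)
qed

lemma block_single_c: "block N c t (single_op N c U) (\<lambda>x y x' y'. if y = y' then U$x$x' else 0)"
  unfolding block_def single_op_def using single_c_cond by auto

lemma block_single_t: "block N c t (single_op N t V) (\<lambda>x y x' y'. if x = x' then V$y$y' else 0)"
  unfolding block_def single_op_def using single_t_cond by auto

lemma block_cnot: "block N c t (cnot_op c t) (\<lambda>x y x' y'. if x = x' \<and> y = (y' \<noteq> x') then 1 else 0)"
  unfolding block_def cnot_op_def
proof (intro ballI allI)
  fix r r' x y x' y' assume r: "r \<in> R0 N c t" and r': "r' \<in> R0 N c t"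
  have e: "(ext c t r' x' y')(t := (ext c t r' x' y' t \<noteq> ext c t r' x' y' c)) = ext c t r' x' (y' \<noteq> x')"
    using ct by (simp add: ext_def)
  show "(if ext c t r x y = (ext c t r' x' y')(t := (ext c t r' x' y' t \<noteq> ext c t r' x' y' c)) then 1 else 0) =
         (if r = r' then if x = x' \<and> y = (y' \<noteq> x') then 1 else 0 else 0)"
    unfolding e using ext_eq_iff[OF r r' ct] by auto
qed

lemma block_gate: "block N c t (gate_op N c t U V) (Gm U V)"
proof -
  have "block N c t (gate_op N c t U V) (\<lambda>x y x' y'. \<Sum>x''\<in>UNIV. \<Sum>y''\<in>UNIV. (if x = x'' \<and> y = (y'' \<noteq> x'') then 1 else 0) *
     (\<Sum>x3\<in>UNIV. \<Sum>y3\<in>UNIV. (if y'' = y3 then U$x''$x3 else 0) * (if x3 = x' then V$y3$y' else 0)))"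
    unfolding gate_op_def by (intro block_mult block_cnot block_single_c block_single_t)
  moreover have "(\<lambda>x y x' y'. \<Sum>x''\<in>UNIV. \<Sum>y''\<in>UNIV. (if x = x'' \<and> y = (y'' \<noteq> x'') then 1 else 0) *
     (\<Sum>x3\<in>UNIV. \<Sum>y3\<in>UNIV. (if y'' = y3 then U$x''$x3 else 0) * (if x3 = x' then V$y3$y' else 0))) = Gm U V"
    by (intro ext) (simp add: sum_bool Gm_def)
  ultimately show ?thesis by simp
qed

definition Prest :: "(nat \<Rightarrow> pauli) \<Rightarrow> (nat \<Rightarrow> bool) \<Rightarrow> (nat \<Rightarrow> bool) \<Rightarrow> complex" where
  "Prest p r r' = (\<Prod>i\<in>{1..N} - {c, t}. sigma (p i) (r i) (r' i))"

lemma pauli_ext: "pauli_op N p (ext c t r x y) (ext c t r' x' y') = Prest p r r' * sigma (p c) x x' * sigma (p t) y y'"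
proof -
  have eq: "{1..N} = insert c (insert t ({1..N} - {c, t}))" using c t by auto
  show ?thesis
    unfolding pauli_op_def Prest_def
    apply (subst eq)
    apply (subst prod.insert, simp, use ct in simp)
    apply (subst prod.insert, simp, simp)
    apply (simp add: ac_simps)
    done
qed

lemma Prest_upd: "Prest (p(c := a, t := a')) = Prest p"
  unfolding Prest_def by (intro ext prod.cong) auto

lemma block_pauli2: "block N c t (pauli_op N (two_pauli c t a a')) (\<lambda>x y x' y'. sigma a x x' * sigma a' y y')"
  unfolding block_def
proof (intro ballI allI)
  fix r r' x y x' y' assume r: "r \<in> R0 N c t" and r': "r' \<in> R0 N c t"
  have "Prest (two_pauli c t a a') r r' = (\<Prod>i\<in>{1..N} - {c, t}. if r i = r' i then 1 else 0)"
    unfolding Prest_def two_pauli_def by (intro prod.cong) auto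
  also have "\<dots> = (if r = r' then 1 else 0)"
    using R0_agree[OF r r'] by (auto simp: prod.neutral)
  finally show "pauli_op N (two_pauli c t a a') (ext c t r x y) (ext c t r' x' y') =
          (if r = r' then sigma a x x' * sigma a' y y' else 0)"
    unfolding pauli_ext using ct by (simp add: two_pauli_def)
qed

end


lemma uniq2:
  assumes "s \<in> {1,-1::complex}" "s' \<in> {1,-1::complex}"
    and "\<forall>x y x' y'. s * (sigma a x x' * sigma a' y y') = s' * (sigma d x x' * sigma d' y y')"
  shows "(d, d') = (a, a')"
  using assms
  by (cases a; cases a'; cases d; cases d') (auto simp: all_bool_eq)

lemma cpc_table: "(\<Sum>x''\<in>UNIV. \<Sum>y''\<in>UNIV. (\<Sum>x3\<in>UNIV. \<Sum>y3\<in>UNIV.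
      (if x = x3 \<and> y = (y3 \<noteq> x3) then 1 else 0) * (sigma a x3 x'' * sigma a' y3 y'')) *
      (if x'' = x' \<and> y'' = (y' \<noteq> x') then 1 else 0))
   = sgf a a' * (sigma (fst (phf a a')) x x' * sigma (snd (phf a a')) y y')"
  by (cases a; cases a'; cases x; cases x'; cases y; cases y') (simp_all add: sum_bool)

definition Tc :: "nat \<Rightarrow> (nat \<Rightarrow> pauli) \<Rightarrow> state \<Rightarrow> complex" where
  "Tc N p \<psi> = (\<Sum>b\<in>bits N. \<Sum>b'\<in>bits N. pauli_op N p b b' * (\<psi> b' * cnj (\<psi> b)))"

lemma xi_Tc: "xi N p \<psi> = 2 powr (- real N / 2) * Re (Tc N p \<psi>)"
  unfolding xi_def Tc_def ..

lemma sum_swap3: "(\<Sum>x\<in>A. \<Sum>y\<in>B. \<Sum>z\<in>C. f x y z) = (\<Sum>z\<in>C. \<Sum>x\<in>A. \<Sum>y\<in>B. f x y z)"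
proof -
  have "(\<Sum>x\<in>A. \<Sum>y\<in>B. \<Sum>z\<in>C. f x y z) = (\<Sum>x\<in>A. \<Sum>z\<in>C. \<Sum>y\<in>B. f x y z)"
    by (rule sum.cong[OF refl]) (rule sum.swap)
  also have "\<dots> = (\<Sum>z\<in>C. \<Sum>x\<in>A. \<Sum>y\<in>B. f x y z)" by (rule sum.swap)
  finally show ?thesis .
qed

lemma sum_swap22: "(\<Sum>x\<in>A. \<Sum>y\<in>B. \<Sum>z\<in>C. \<Sum>w\<in>D. f x y z w) = (\<Sum>z\<in>C. \<Sum>w\<in>D. \<Sum>x\<in>A. \<Sum>y\<in>B. f x y z w)"
proof -
  have "(\<Sum>x\<in>A. \<Sum>y\<in>B. \<Sum>z\<in>C. \<Sum>w\<in>D. f x y z w) = (\<Sum>x\<in>A. \<Sum>z\<in>C. \<Sum>y\<in>B. \<Sum>w\<in>D. f x y z w)"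
    by (rule sum.cong[OF refl], rule sum.swap)
  also have "\<dots> = (\<Sum>x\<in>A. \<Sum>z\<in>C. \<Sum>w\<in>D. \<Sum>y\<in>B. f x y z w)"
    by (rule sum.cong[OF refl], rule sum.cong[OF refl], rule sum.swap)
  also have "\<dots> = (\<Sum>z\<in>C. \<Sum>x\<in>A. \<Sum>w\<in>D. \<Sum>y\<in>B. f x y z w)"
    by (rule sum.swap)
  also have "\<dots> = (\<Sum>z\<in>C. \<Sum>w\<in>D. \<Sum>x\<in>A. \<Sum>y\<in>B. f x y z w)"
    by (rule sum.cong[OF refl], rule sum.swap)
  finally show ?thesis .
qed

context ctN begin

lemma ext_surj: "b \<in> bits N \<Longrightarrow> b(c:=False,t:=False) \<in> R0 N c t \<and> ext c t (b(c:=False,t:=False)) (b c) (b t) = b"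
  by (auto simp: R0_def bits_def ext_def)

lemma Tc_decomp: "Tc N p \<psi> = (\<Sum>r\<in>R0 N c t. \<Sum>r'\<in>R0 N c t. Prest p r r' *
      K2 (p c) (p t) (\<lambda>x' y'. \<psi> (ext c t r' x' y')) (\<lambda>x y. \<psi> (ext c t r x y)))"
proof -
  have "Tc N p \<psi> = (\<Sum>r\<in>R0 N c t. \<Sum>x\<in>UNIV. \<Sum>y\<in>UNIV. \<Sum>r'\<in>R0 N c t. \<Sum>x'\<in>UNIV. \<Sum>y'\<in>UNIV.
      Prest p r r' * sigma (p c) x x' * sigma (p t) y y' * (\<psi> (ext c t r' x' y') * cnj (\<psi> (ext c t r x y))))"
    unfolding Tc_def bsum pauli_ext ..
  also have "\<dots> = (\<Sum>r\<in>R0 N c t. \<Sum>r'\<in>R0 N c t. \<Sum>x\<in>UNIV. \<Sum>y\<in>UNIV. \<Sum>x'\<in>UNIV. \<Sum>y'\<in>UNIV.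
      Prest p r r' * sigma (p c) x x' * sigma (p t) y y' * (\<psi> (ext c t r' x' y') * cnj (\<psi> (ext c t r x y))))"
    by (rule sum.cong[OF refl]) (rule sum_swap3)
  also have "\<dots> = (\<Sum>r\<in>R0 N c t. \<Sum>r'\<in>R0 N c t. Prest p r r' *
      K2 (p c) (p t) (\<lambda>x' y'. \<psi> (ext c t r' x' y')) (\<lambda>x y. \<psi> (ext c t r x y)))"
    unfolding K2_def by (simp add: sum_distrib_left mult_ac)
  finally show ?thesis .
qed

lemma gate_ext: "r \<in> R0 N c t \<Longrightarrow> (\<lambda>x y. mat_vec N (gate_op N c t U V) \<psi> (ext c t r x y)) = Gv U V (\<lambda>x y. \<psi> (ext c t r x y))"
  unfolding Gv_def by (intro ext block_mat_vec[OF block_gate])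

lemma Tc_gate: "Tc N p (mat_vec N (gate_op N c t U V) \<psi>) = sgf (p c) (p t) *
    (\<Sum>b\<in>UNIV. \<Sum>b'\<in>UNIV. Rc U (fst (phf (p c) (p t))) b * Rc V (snd (phf (p c) (p t))) b' * Tc N (p(c := b, t := b')) \<psi>)"
proof -
  let ?a = "fst (phf (p c) (p t))" and ?a' = "snd (phf (p c) (p t))"
  have "Tc N p (mat_vec N (gate_op N c t U V) \<psi>) = (\<Sum>r\<in>R0 N c t. \<Sum>r'\<in>R0 N c t. Prest p r r' *
      (sgf (p c) (p t) * (\<Sum>b\<in>UNIV. \<Sum>b'\<in>UNIV. Rc U ?a b * Rc V ?a' b' *
         K2 b b' (\<lambda>x' y'. \<psi> (ext c t r' x' y')) (\<lambda>x y. \<psi> (ext c t r x y)))))"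
    unfolding Tc_decomp
    by (intro sum.cong refl) (simp add: gate_ext K2_gate)
  also have "\<dots> = sgf (p c) (p t) * (\<Sum>b\<in>UNIV. \<Sum>b'\<in>UNIV. Rc U ?a b * Rc V ?a' b' *
      (\<Sum>r\<in>R0 N c t. \<Sum>r'\<in>R0 N c t. Prest p r r' * K2 b b' (\<lambda>x' y'. \<psi> (ext c t r' x' y')) (\<lambda>x y. \<psi> (ext c t r x y))))"
  proof -
    let ?f = "\<lambda>r r' b b'. Prest p r r' * Rc U ?a b * Rc V ?a' b' *
         K2 b b' (\<lambda>x' y'. \<psi> (ext c t r' x' y')) (\<lambda>x y. \<psi> (ext c t r x y))"
    have "(\<Sum>r\<in>R0 N c t. \<Sum>r'\<in>R0 N c t. Prest p r r' *
      (sgf (p c) (p t) * (\<Sum>b\<in>UNIV. \<Sum>b'\<in>UNIV. Rc U ?a b * Rc V ?a' b' *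
         K2 b b' (\<lambda>x' y'. \<psi> (ext c t r' x' y')) (\<lambda>x y. \<psi> (ext c t r x y)))))
      = sgf (p c) (p t) * (\<Sum>r\<in>R0 N c t. \<Sum>r'\<in>R0 N c t. \<Sum>b\<in>UNIV. \<Sum>b'\<in>UNIV. ?f r r' b b')"
      by (simp add: sum_distrib_left mult_ac)
    also have "\<dots> = sgf (p c) (p t) * (\<Sum>b\<in>UNIV. \<Sum>b'\<in>UNIV. \<Sum>r\<in>R0 N c t. \<Sum>r'\<in>R0 N c t. ?f r r' b b')"
      by (subst sum_swap22) (rule refl)
    also have "\<dots> = sgf (p c) (p t) * (\<Sum>b\<in>UNIV. \<Sum>b'\<in>UNIV. Rc U ?a b * Rc V ?a' b' *
      (\<Sum>r\<in>R0 N c t. \<Sum>r'\<in>R0 N c t. Prest p r r' * K2 b b' (\<lambda>x' y'. \<psi> (ext c t r' x' y')) (\<lambda>x y. \<psi> (ext c t r x y))))"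
      by (simp add: sum_distrib_left mult_ac)
    finally show ?thesis .
  qed
  also have "\<dots> = sgf (p c) (p t) *
    (\<Sum>b\<in>UNIV. \<Sum>b'\<in>UNIV. Rc U ?a b * Rc V ?a' b' * Tc N (p(c := b, t := b')) \<psi>)"
    unfolding Tc_decomp[of "p(c := _, t := _)"] Prest_upd using ct by simp
  finally show ?thesis .
qed

end

definition Rr :: "mat2 \<Rightarrow> pauli \<Rightarrow> pauli \<Rightarrow> real" where
  "Rr U a b = Re (Rc U a b)"

lemma Rc_Rr: "Rc U a b = complex_of_real (Rr U a b)"
  unfolding Rr_def using Rc_real[of U a b] by (metis Reals_cnj_iff of_real_Re)

definition sgr :: "pauli \<Rightarrow> pauli \<Rightarrow> real" where
  "sgr a a' = Re (sgf a a')"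

lemma sgf_sgr: "sgf a a' = complex_of_real (sgr a a')"
  unfolding sgr_def by (cases a; cases a') (simp_all add: complex_eq_iff)

lemma sgr_sq: "(sgr a a')\<^sup>2 = 1"
  unfolding sgr_def by (cases a; cases a') simp_all

context ctN begin

lemma xi_gate: "xi N p (mat_vec N (gate_op N c t U V) \<psi>) = sgr (p c) (p t) *
    (\<Sum>b\<in>UNIV. \<Sum>b'\<in>UNIV. Rr U (fst (phf (p c) (p t))) b * Rr V (snd (phf (p c) (p t))) b' * xi N (p(c := b, t := b')) \<psi>)"
  unfolding xi_Tc Tc_gate Rc_Rr sgf_sgr
  by (simp add: sum_distrib_left mult_ac Re_sum)

lemma phat_eq: "phat N c t p = phf (p c) (p t)"
  unfolding phat_def
proof (rule the_equality)
  let ?CPC = "op_mult N (op_mult N (cnot_op c t) (pauli_op N (two_pauli c t (p c) (p t)))) (cnot_op c t)"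
  have bl: "block N c t ?CPC (\<lambda>x y x' y'. sgf (p c) (p t) * (sigma (fst (phf (p c) (p t))) x x' * sigma (snd (phf (p c) (p t))) y y'))"
    using block_mult[OF block_mult[OF block_cnot block_pauli2] block_cnot] unfolding cpc_table .
  have bl2: "\<And>a a'. block N c t (pauli_op N (two_pauli c t a a')) (\<lambda>x y x' y'. sigma a x x' * sigma a' y y')"
    by (rule block_pauli2)
  show "\<exists>s\<in>{1, -1}. \<forall>b\<in>bits N. \<forall>b'\<in>bits N. ?CPC b b' = s * pauli_op N (two_pauli c t (fst (phf (p c) (p t))) (snd (phf (p c) (p t)))) b b'"
  proof (intro bexI ballI)
    fix b b' assume b: "b \<in> bits N" and b': "b' \<in> bits N"
    obtain r x y where r: "r \<in> R0 N c t" and be: "b = ext c t r x y" using ext_surj[OF b] by metis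
    obtain r' x' y' where r': "r' \<in> R0 N c t" and be': "b' = ext c t r' x' y'" using ext_surj[OF b'] by metis
    show "?CPC b b' = sgf (p c) (p t) * pauli_op N (two_pauli c t (fst (phf (p c) (p t))) (snd (phf (p c) (p t)))) b b'"
      using bl bl2 r r' unfolding be be' block_def by simp
  next
    show "sgf (p c) (p t) \<in> {1, -1}" by (cases "p c"; cases "p t") simp_all
  qed
  fix ab assume "\<exists>s\<in>{1, -1}. \<forall>b\<in>bits N. \<forall>b'\<in>bits N. ?CPC b b' = s * pauli_op N (two_pauli c t (fst ab) (snd ab)) b b'"
  then obtain s where s: "s \<in> {1, -1}" and h: "\<forall>b\<in>bits N. \<forall>b'\<in>bits N. ?CPC b b' = s * pauli_op N (two_pauli c t (fst ab) (snd ab)) b b'"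
    by blast
  have r0: "(\<lambda>_. False) \<in> R0 N c t" by (simp add: R0_def bits_def)
  have "\<forall>x y x' y'. sgf (p c) (p t) * (sigma (fst (phf (p c) (p t))) x x' * sigma (snd (phf (p c) (p t))) y y')
      = s * (sigma (fst ab) x x' * sigma (snd ab) y y')"
  proof (intro allI)
    fix x y x' y'
    have "?CPC (ext c t (\<lambda>_. False) x y) (ext c t (\<lambda>_. False) x' y') = s * pauli_op N (two_pauli c t (fst ab) (snd ab)) (ext c t (\<lambda>_. False) x y) (ext c t (\<lambda>_. False) x' y')"
      using h ext_bits[OF r0 c t] by blast
    then show "sgf (p c) (p t) * (sigma (fst (phf (p c) (p t))) x x' * sigma (snd (phf (p c) (p t))) y y')
      = s * (sigma (fst ab) x x' * sigma (snd ab) y y')"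
      using bl bl2 r0 unfolding block_def by simp
  qed
  moreover have "sgf (p c) (p t) \<in> {1, -1}" by (cases "p c"; cases "p t") simp_all
  ultimately have "(fst ab, snd ab) = (fst (phf (p c) (p t)), snd (phf (p c) (p t)))"
    using uniq2 s by blast
  then show "ab = phf (p c) (p t)" by simp
qed

end



lemma unit_e1: "unitary2 U \<Longrightarrow> (\<Sum>k\<in>UNIV. U$i$k * cnj (U$j$k)) = (if i = j then 1 else 0)"
  unfolding unitary2_def
  by (drule arg_cong[where f = "\<lambda>M. M $ i $ j"]) (simp add: matrix_matrix_mult_def cadj_def mat_def)

lemma unit_e2: "unitary2 U \<Longrightarrow> (\<Sum>k\<in>UNIV. cnj (U$k$i) * U$k$j) = (if i = j then 1 else 0)"
  unfolding unitary2_def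
  apply (drule matrix_left_right_inverse1)
  by (drule arg_cong[where f = "\<lambda>M. M $ i $ j"]) (simp add: matrix_matrix_mult_def cadj_def mat_def)

lemma Rc_P0: assumes "unitary2 U" shows "Rc U P0 b = (if b = P0 then 1 else 0)"
proof -
  have "Ucon U P0 i j = (if i = j then 1 else 0)" for i j
    unfolding Ucon_def using unit_e2[OF assms, of i j] by (simp add: sum_bool)
  then show ?thesis unfolding Rc_def by (cases b) (simp_all add: sum_bool)
qed

lemma Rc_Xb0: assumes "unitary2 U" "a \<noteq> P0" shows "Rc U a P0 = 0"
proof -
  have "Rc U a P0 = (\<Sum>k\<in>UNIV. \<Sum>l\<in>UNIV. sigma a k l * (\<Sum>i\<in>UNIV. U$l$i * cnj (U$k$i))) / 2"
    unfolding Rc_def Ucon_def by (simp add: sum_bool algebra_simps)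
  also have "\<dots> = 0" using assms(2) by (simp add: unit_e1[OF assms(1)] sum_bool) (cases a; simp)
  finally show ?thesis .
qed

definition Wm :: "mat2 \<Rightarrow> pauli \<Rightarrow> bool \<Rightarrow> bool \<Rightarrow> complex" where
  "Wm U b l k = (\<Sum>i\<in>UNIV. \<Sum>j\<in>UNIV. U$l$j * sigma b j i * cnj (U$k$i))"

lemma Rc_W: "Rc U a b = (\<Sum>k\<in>UNIV. \<Sum>l\<in>UNIV. sigma a k l * Wm U b l k) / 2"
  unfolding Rc_def Ucon_def Wm_def by (simp add: sum_bool algebra_simps)

lemma stepB: "(\<Sum>a\<in>UNIV. (\<Sum>k\<in>UNIV. \<Sum>l\<in>UNIV. sigma a k l * A l k) * (\<Sum>k\<in>UNIV. \<Sum>l\<in>UNIV. sigma a k l * B l k))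
   = 2 * (\<Sum>k\<in>UNIV. \<Sum>l\<in>UNIV. A k l * B l k)"
  by (simp add: sum_pauli sum_bool algebra_simps)

lemma stepC_pre: "(\<Sum>k\<in>UNIV. \<Sum>l\<in>UNIV. Wm U b k l * Wm U d l k) =
   (\<Sum>i\<in>UNIV. \<Sum>j\<in>UNIV. \<Sum>i'\<in>UNIV. \<Sum>j'\<in>UNIV. sigma b j i * sigma d j' i' *
      (\<Sum>l\<in>UNIV. cnj (U$l$i) * U$l$j') * (\<Sum>k\<in>UNIV. cnj (U$k$i') * U$k$j))"
  unfolding Wm_def by (simp add: sum_bool algebra_simps)

lemma stepC: "unitary2 U \<Longrightarrow> (\<Sum>k\<in>UNIV. \<Sum>l\<in>UNIV. Wm U b k l * Wm U d l k) = (if b = d then 2 else 0)"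
  unfolding stepC_pre unit_e2
  by (cases b; cases d) (simp_all add: sum_bool)

lemma col_orth: assumes "unitary2 U" shows "(\<Sum>a\<in>UNIV. Rc U a b * Rc U a d) = (if b = d then 1 else 0)"
proof -
  have "(\<Sum>a\<in>UNIV. Rc U a b * Rc U a d) = (\<Sum>a\<in>UNIV. (\<Sum>k\<in>UNIV. \<Sum>l\<in>UNIV. sigma a k l * Wm U b l k) * (\<Sum>k\<in>UNIV. \<Sum>l\<in>UNIV. sigma a k l * Wm U d l k)) / 4"
    unfolding Rc_W times_divide_times_eq sum_divide_distrib[symmetric] by simp
  also have "\<dots> = (if b = d then 1 else 0)"
    unfolding stepB stepC[OF assms] by simp
  finally show ?thesis .
qed

lemma col_orth3: assumes "unitary2 U" "b \<noteq> P0"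
  shows "Rr U PX b * Rr U PX d + Rr U PY b * Rr U PY d + Rr U PZ b * Rr U PZ d = (if b = d then 1 else 0)"
proof -
  have "complex_of_real (Rr U PX b * Rr U PX d + Rr U PY b * Rr U PY d + Rr U PZ b * Rr U PZ d)
     = (\<Sum>a\<in>UNIV. Rc U a b * Rc U a d) - Rc U P0 b * Rc U P0 d"
    by (simp add: sum_pauli Rc_Rr)
  also have "\<dots> = (if b = d then 1 else 0)"
    using assms by (simp add: col_orth Rc_P0)
  finally show ?thesis by (metis of_real_1 of_real_eq_iff of_real_0)
qed

definition Gcl :: mat2 where
  "Gcl = (\<chi> i j. if i then (if j then (1 - \<i>)/2 else (-1 + \<i>)/2) else (1 + \<i>)/2)"

lemma Gcl_unitary: "unitary2 Gcl"
  unfolding unitary2_def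
  by (simp add: vec_eq_iff matrix_matrix_mult_def cadj_def mat_def Gcl_def sum_bool all_bool_eq
         complex_eq_iff field_simps)

fun cyc :: "pauli \<Rightarrow> pauli" where
  "cyc PX = PY" | "cyc PY = PZ" | "cyc PZ = PX" | "cyc P0 = P0"

lemma Gcl_conj: "(\<Sum>k\<in>UNIV. \<Sum>l\<in>UNIV. cnj (Gcl$k$m) * sigma a k l * Gcl$l$n) = sigma (cyc a) m n"
  by (cases a; cases m; cases n) (simp_all add: Gcl_def sum_bool complex_eq_iff field_simps)

lemma Rc_Gcl: "Rc (Gcl ** U) a b = Rc U (cyc a) b"
proof -
  have "Ucon (Gcl ** U) a i j = Ucon U (cyc a) i j" for i j
  proof -
    have "Ucon (Gcl ** U) a i j = (\<Sum>m\<in>UNIV. \<Sum>n\<in>UNIV. cnj (U$m$i) * (\<Sum>k\<in>UNIV. \<Sum>l\<in>UNIV. cnj (Gcl$k$m) * sigma a k l * Gcl$l$n) * U$n$j)"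
      unfolding Ucon_def by (simp add: matrix_matrix_mult_def sum_bool algebra_simps)
    then show ?thesis unfolding Gcl_conj Ucon_def .
  qed
  then show ?thesis unfolding Rc_def by simp
qed



lemma cont_Rr: "continuous_on UNIV (\<lambda>U::mat2. Rr U a b)"
  unfolding Rr_def Rc_def Ucon_def by (intro continuous_intros) auto

lemma meas_Rr_borel[measurable]: "(\<lambda>U::mat2. Rr U a b) \<in> borel_measurable borel"
  by (rule borel_measurable_continuous_onI[OF cont_Rr])

lemma cont_Gmult: "continuous_on UNIV (\<lambda>U::mat2. Gcl ** U)"
  unfolding matrix_matrix_mult_def by (intro continuous_intros)

lemma norm_sigma_le: "norm (sigma a x y) \<le> 1"
  by (cases a) auto

lemma unit_entry_le: assumes "unitary2 U" shows "norm (U$i$k) \<le> 1"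
proof -
  have "(\<Sum>k\<in>UNIV. U$i$k * cnj (U$i$k)) = 1" using unit_e1[OF assms, of i i] by (simp only: simp_thms if_True)
  then have "(\<Sum>k\<in>UNIV. complex_of_real ((cmod (U$i$k))\<^sup>2)) = 1" unfolding complex_norm_square .
  then have "complex_of_real (\<Sum>k\<in>UNIV. (cmod (U$i$k))\<^sup>2) = 1" by (simp only: of_real_sum)
  then have "(\<Sum>k\<in>UNIV. (cmod (U$i$k))\<^sup>2) = 1" using of_real_eq_1_iff by blast
  moreover have "(cmod (U$i$k))\<^sup>2 \<le> (\<Sum>k\<in>UNIV. (cmod (U$i$k))\<^sup>2)"
    by (rule member_le_sum) auto
  ultimately have "(cmod (U$i$k))\<^sup>2 \<le> 1" by simp
  then show ?thesis using abs_square_le_1[of "cmod (U$i$k)"] by simp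
qed

lemma Rr_bound: assumes "unitary2 U" shows "\<bar>Rr U a b\<bar> \<le> 8"
proof -
  have t: "norm (cnj (U$k$i) * sigma a k l * U$l$j) \<le> 1" for k i l j
  proof -
    have "norm (U$k$i) * norm (sigma a k l) \<le> 1"
      by (rule mult_le_one[OF unit_entry_le[OF assms] norm_ge_zero norm_sigma_le])
    then have "norm (U$k$i) * norm (sigma a k l) * norm (U$l$j) \<le> 1"
      by (rule mult_le_one[OF _ norm_ge_zero unit_entry_le[OF assms]])
    then show ?thesis unfolding norm_mult complex_mod_cnj .
  qed
  have u: "norm (Ucon U a i j) \<le> 4" for i j
  proof -
    have "norm (Ucon U a i j) \<le> (\<Sum>k\<in>(UNIV::bool set). \<Sum>l\<in>(UNIV::bool set). 1)"
      unfolding Ucon_def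
      by (intro order.trans[OF norm_sum] sum_mono order.trans[OF norm_sum] sum_mono t)
    then show ?thesis by simp
  qed
  have v: "norm (sigma b j i * Ucon U a i j) \<le> 4" for i j
  proof -
    have "norm (sigma b j i) * norm (Ucon U a i j) \<le> 1 * 4"
      by (rule mult_mono[OF norm_sigma_le u]) auto
    then show ?thesis unfolding norm_mult by simp
  qed
  have "norm (\<Sum>i\<in>UNIV. \<Sum>j\<in>UNIV. sigma b j i * Ucon U a i j) \<le> (\<Sum>i\<in>(UNIV::bool set). \<Sum>j\<in>(UNIV::bool set). 4)"
    by (intro order.trans[OF norm_sum] sum_mono order.trans[OF norm_sum] v)
  moreover have "norm (Rc U a b) = norm (\<Sum>i\<in>UNIV. \<Sum>j\<in>UNIV. sigma b j i * Ucon U a i j) / 2"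
    unfolding Rc_def by (simp add: norm_divide)
  ultimately have "norm (Rc U a b) \<le> 8" by simp
  then show ?thesis unfolding Rr_def using abs_Re_le_cmod order.trans by blast
qed

locale haar =
  fixes \<mu> :: "mat2 measure"
  assumes H: "is_haar \<mu>"
begin

lemma prob: "prob_space \<mu>" using H unfolding is_haar_def by blast
lemma sets_mu: "sets \<mu> = sets borel" using H unfolding is_haar_def by blast
lemma AE_unit: "AE U in \<mu>. unitary2 U" using H unfolding is_haar_def by blast
lemma inv: "unitary2 G \<Longrightarrow> distr \<mu> borel (\<lambda>U. G ** U) = \<mu>" using H unfolding is_haar_def by blast

lemma space_mu: "space \<mu> = UNIV"
  using sets_eq_imp_space_eq[OF sets_mu] by simp

lemma meas_mu: "f \<in> borel_measurable borel \<Longrightarrow> f \<in> borel_measurable \<mu>"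
  using measurable_cong_sets[OF sets_mu refl] by blast

lemma meas_RR: "(\<lambda>U. Rr U a b * Rr U a' b') \<in> borel_measurable \<mu>"
  by (rule meas_mu) measurable

lemma int_RR: "integrable \<mu> (\<lambda>U. Rr U a b * Rr U a' b')"
proof (rule finite_measure.integrable_const_bound[where B = 64])
  show "finite_measure \<mu>" using prob prob_space.finite_measure by blast
  show "AE U in \<mu>. norm (Rr U a b * Rr U a' b') \<le> 64"
    using AE_unit
  proof eventually_elim
    case (elim U)
    have "\<bar>Rr U a b\<bar> * \<bar>Rr U a' b'\<bar> \<le> 8 * 8"
      using Rr_bound[OF elim] by (intro mult_mono) auto
    then show ?case by (simp add: abs_mult)
  qed
qed (rule meas_RR)

lemma invariance: fixes f :: "mat2 \<Rightarrow> real" assumes "f \<in> borel_measurable borel"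
  shows "(\<integral>U. f U \<partial>\<mu>) = (\<integral>U. f (Gcl ** U) \<partial>\<mu>)"
proof -
  have m: "(\<lambda>U. Gcl ** U) \<in> measurable \<mu> borel"
    by (rule meas_mu, rule borel_measurable_continuous_onI[OF cont_Gmult])
  have "(\<integral>U. f U \<partial>\<mu>) = (\<integral>U. f U \<partial>(distr \<mu> borel (\<lambda>U. Gcl ** U)))"
    using inv[OF Gcl_unitary] by simp
  also have "\<dots> = (\<integral>U. f (Gcl ** U) \<partial>\<mu>)"
    by (rule integral_distr[OF m assms])
  finally show ?thesis .
qed

lemma Rr_Gcl: "Rr (Gcl ** U) a b = Rr U (cyc a) b"
  unfolding Rr_def Rc_Gcl ..

lemma haar_cyc: "(\<integral>U. Rr U a b * Rr U a d \<partial>\<mu>) = (\<integral>U. Rr U (cyc a) b * Rr U (cyc a) d \<partial>\<mu>)"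
  by (subst invariance) (measurable, simp add: Rr_Gcl)

lemma int_const_mu: "(\<integral>U. k \<partial>\<mu>) = (k::real)"
  by (simp add: prob_space.prob_space[OF prob])

lemma haar_int: "(\<integral>U. Rr U a b * Rr U a d \<partial>\<mu>) = (if b = d then wt a b else 0)"
proof (cases "a = P0")
  case True
  have "(\<integral>U. Rr U a b * Rr U a d \<partial>\<mu>) = (\<integral>U. (if b = P0 \<and> d = P0 then 1 else 0) \<partial>\<mu>)"
    apply (rule integral_cong_AE)
      apply (rule meas_RR)
     apply simp
    using AE_unit by eventually_elim (simp add: True Rr_def Rc_P0)
  then show ?thesis by (simp add: prob_space.prob_space[OF prob] wt_def True)
next
  case a: False
  show ?thesis
  proof (cases "b = P0 \<or> d = P0")
    case True
    have "(\<integral>U. Rr U a b * Rr U a d \<partial>\<mu>) = (\<integral>U. 0 \<partial>\<mu>)"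
      apply (rule integral_cong_AE)
        apply (rule meas_RR)
       apply simp
      using AE_unit by eventually_elim (use True a in \<open>auto simp: Rr_def Rc_Xb0\<close>)
    then show ?thesis using True a by (auto simp: wt_def)
  next
    case False
    then have b: "b \<noteq> P0" and d: "d \<noteq> P0" by auto
    define M where "M a = (\<integral>U. Rr U a b * Rr U a d \<partial>\<mu>)" for a
    have c: "M x = M (cyc x)" for x unfolding M_def by (rule haar_cyc)
    have eq: "M PX = M PY" "M PY = M PZ" using c[of PX] c[of PY] by simp_all
    have "M PX + M PY + M PZ = (\<integral>U. Rr U PX b * Rr U PX d + Rr U PY b * Rr U PY d + Rr U PZ b * Rr U PZ d \<partial>\<mu>)"
      unfolding M_def using int_RR by simp
    also have "\<dots> = (\<integral>U. (if b = d then 1 else 0) \<partial>\<mu>)"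
      apply (rule integral_cong_AE)
        apply (rule meas_mu, measurable)
      using AE_unit by eventually_elim (rule col_orth3[OF _ b])
    also have "\<dots> = (if b = d then 1 else 0)" by (rule int_const_mu)
    finally have "M PX + M PY + M PZ = (if b = d then 1 else 0)" .
    then have "M a = (if b = d then 1/3 else 0)"
      using eq a by (cases a) auto
    then show ?thesis unfolding M_def using a b by (simp add: wt_def)
  qed
qed

end



lemma wt_sym: "wt a b = wt b a"
  unfolding wt_def by auto

lemma wt_nonneg: "wt a b \<ge> 0"
  unfolding wt_def by auto

lemma kron_sym: "kron a b = kron b a"
  unfolding kron_def by auto

lemma finite_paulis: "finite (paulis N)"
proof (rule finite_subset)
  show "paulis N \<subseteq> (\<lambda>f i. if i \<in> {1..N} then f i else P0) ` (PiE {1..N} (\<lambda>_. UNIV))"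
  proof
    fix p assume p: "p \<in> paulis N"
    have "p = (\<lambda>i. if i \<in> {1..N} then restrict p {1..N} i else P0)"
      using p by (auto simp: paulis_def)
    moreover have "restrict p {1..N} \<in> PiE {1..N} (\<lambda>_. UNIV)" by auto
    ultimately show "p \<in> (\<lambda>f i. if i \<in> {1..N} then f i else P0) ` (PiE {1..N} (\<lambda>_. UNIV))" by blast
  qed
qed (intro finite_imageI finite_PiE, auto)

lemma sq_expand: "(\<Sum>b\<in>UNIV. \<Sum>b'\<in>UNIV. A b * B b' * X b b')\<^sup>2 =
   (\<Sum>b\<in>UNIV. \<Sum>b'\<in>UNIV. \<Sum>d\<in>UNIV. \<Sum>d'\<in>UNIV. (A b * A d * X b b' * X d d') * (B b' * B d' :: real))"
  apply (simp only: power2_eq_square sum_distrib_right sum_distrib_left)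
  apply (intro sum.cong refl)
  apply (simp add: mult_ac)
  done

context ctN begin

lemma sum_paulis_local:
  assumes p: "p \<in> paulis N"
  shows "(\<Sum>q\<in>paulis N. (\<Prod>i\<in>{1..N} - {c, t}. kron (q i) (p i)) * F q) = (\<Sum>a\<in>UNIV. \<Sum>a'\<in>UNIV. F (p(c := a, t := a')))"
proof -
  let ?S = "(\<lambda>(a, a'). p(c := a, t := a')) ` UNIV"
  have Ssub: "?S \<subseteq> paulis N" using p c t by (auto simp: paulis_def)
  have "(\<Sum>q\<in>paulis N. (\<Prod>i\<in>{1..N} - {c, t}. kron (q i) (p i)) * F q) = (\<Sum>q\<in>?S. (\<Prod>i\<in>{1..N} - {c, t}. kron (q i) (p i)) * F q)"
  proof (rule sum.mono_neutral_right[OF finite_paulis Ssub], rule ballI)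
    fix q assume q: "q \<in> paulis N - ?S"
    have "\<exists>i\<in>{1..N} - {c, t}. q i \<noteq> p i"
    proof (rule ccontr)
      assume "\<not> ?thesis"
      then have "q = p(c := q c, t := q t)"
      proof -
        assume h: "\<not> (\<exists>i\<in>{1..N} - {c, t}. q i \<noteq> p i)"
        show ?thesis
        proof
          fix i show "q i = (p(c := q c, t := q t)) i"
            using h q p by (cases "i = c \<or> i = t"; cases "i \<in> {1..N}") (auto simp: paulis_def)
        qed
      qed
      then have "q = (\<lambda>(a, a'). p(c := a, t := a')) (q c, q t)" by simp
      then have "q \<in> ?S" by (metis rangeI)
      then show False using q by blast
    qed
    then have "(\<Prod>i\<in>{1..N} - {c, t}. kron (q i) (p i)) = 0"
      by (intro prod_zero) (auto simp: kron_def)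
    then show "(\<Prod>i\<in>{1..N} - {c, t}. kron (q i) (p i)) * F q = 0" by simp
  qed
  also have "\<dots> = (\<Sum>z\<in>UNIV. (\<lambda>q. (\<Prod>i\<in>{1..N} - {c, t}. kron (q i) (p i)) * F q) ((\<lambda>(a, a'). p(c := a, t := a')) z))"
  proof -
    have inj: "inj (\<lambda>(a, a'). p(c := a, t := a'))"
    proof (rule injI)
      fix x y :: "pauli \<times> pauli"
      assume h: "(\<lambda>(a, a'). p(c := a, t := a')) x = (\<lambda>(a, a'). p(c := a, t := a')) y"
      have "fst x = fst y" using fun_cong[OF h, of c] ct by (simp add: split_def)
      moreover have "snd x = snd y" using fun_cong[OF h, of t] by (simp add: split_def)
      ultimately show "x = y" by (simp add: prod_eq_iff)
    qed
    show ?thesis by (simp only: sum.reindex[OF inj] comp_def)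
  qed
  also have "\<dots> = (\<Sum>z\<in>UNIV. F (p(c := fst z, t := snd z)))"
    by (intro sum.cong refl) (auto simp: kron_def split: prod.splits intro!: prod.neutral)
  also have "\<dots> = (\<Sum>a\<in>UNIV. \<Sum>a'\<in>UNIV. F (p(c := a, t := a')))"
    by (simp add: UNIV_Times_UNIV[symmetric] sum.cartesian_product' del: UNIV_Times_UNIV)
  finally show ?thesis .
qed

lemma Pct_sum_q:
  assumes p: "p \<in> paulis N"
  shows "(\<Sum>q\<in>paulis N. Pct N c t q p * f q) = (\<Sum>a\<in>UNIV. \<Sum>a'\<in>UNIV.
     wt (fst (phf (p c) (p t))) a * wt (snd (phf (p c) (p t))) a' * f (p(c := a, t := a')))"
proof -
  have "(\<Sum>q\<in>paulis N. Pct N c t q p * f q) = (\<Sum>q\<in>paulis N. (\<Prod>i\<in>{1..N} - {c, t}. kron (q i) (p i)) *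
      (wt (q c) (fst (phf (p c) (p t))) * wt (q t) (snd (phf (p c) (p t))) * f q))"
    unfolding Pct_def phat_eq by (simp add: mult_ac)
  also have "\<dots> = (\<Sum>a\<in>UNIV. \<Sum>a'\<in>UNIV.
     wt (fst (phf (p c) (p t))) a * wt (snd (phf (p c) (p t))) a' * f (p(c := a, t := a')))"
    unfolding sum_paulis_local[OF p] using ct by (simp add: wt_sym)
  finally show ?thesis .
qed

lemma stoch_ct:
  assumes q: "q \<in> paulis N"
  shows "(\<Sum>p\<in>paulis N. Pct N c t q p) = 1"
proof -
  have "(\<Sum>p\<in>paulis N. Pct N c t q p) = (\<Sum>p\<in>paulis N. (\<Prod>i\<in>{1..N} - {c, t}. kron (p i) (q i)) *
      (wt (q c) (fst (phf (p c) (p t))) * wt (q t) (snd (phf (p c) (p t)))))"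
    unfolding Pct_def phat_eq by (simp add: mult_ac kron_sym)
  also have "\<dots> = (\<Sum>a\<in>UNIV. \<Sum>a'\<in>UNIV. wt (q c) (fst (phf a a')) * wt (q t) (snd (phf a a')))"
    unfolding sum_paulis_local[OF q] using ct by simp
  also have "\<dots> = 1"
    by (cases "q c"; cases "q t") (simp_all add: sum_pauli wt_def)
  finally show ?thesis .
qed

lemma Pct_nonneg: "Pct N c t q p \<ge> 0"
  unfolding Pct_def by (intro mult_nonneg_nonneg wt_nonneg prod_nonneg) (auto simp: kron_def)

end



lemma delta2: fixes b b' :: pauli shows "(\<Sum>d\<in>UNIV. \<Sum>d'\<in>UNIV. (if b = d then \<alpha> d else 0) * \<beta> d d' * (if b' = d' then \<gamma> d' else (0::real)))
   = \<alpha> b * \<beta> b b' * \<gamma> b'"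
proof -
  have "\<And>d d'. (if b = d then \<alpha> d else 0) * \<beta> d d' * (if b' = d' then \<gamma> d' else (0::real))
     = (if d = b then (if d' = b' then \<alpha> b * \<beta> b b' * \<gamma> b' else 0) else 0)" by auto
  then have "(\<Sum>d\<in>UNIV. \<Sum>d'\<in>UNIV. (if b = d then \<alpha> d else 0) * \<beta> d d' * (if b' = d' then \<gamma> d' else (0::real)))
     = (\<Sum>d\<in>UNIV. (if d = b then \<alpha> b * \<beta> b b' * \<gamma> b' else 0))"
    by (intro sum.cong refl) (simp add: sum.delta)
  then show ?thesis by (simp add: sum.delta)
qed

locale p3 = ctN N c t + haar \<mu> for N c t \<mu>
begin

definition a1 :: "(nat \<Rightarrow> pauli) \<Rightarrow> pauli" where "a1 p = fst (phf (p c) (p t))"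
definition a2 :: "(nat \<Rightarrow> pauli) \<Rightarrow> pauli" where "a2 p = snd (phf (p c) (p t))"
definition XX :: "(nat \<Rightarrow> pauli) \<Rightarrow> state \<Rightarrow> pauli \<Rightarrow> pauli \<Rightarrow> real" where
  "XX p \<psi> b b' = xi N (p(c := b, t := b')) \<psi>"

definition kU :: "(nat \<Rightarrow> pauli) \<Rightarrow> state \<Rightarrow> mat2 \<Rightarrow> real" where
  "kU p \<psi> U = (\<Sum>b\<in>UNIV. \<Sum>b'\<in>UNIV. \<Sum>d\<in>UNIV. \<Sum>d'\<in>UNIV.
      (Rr U (a1 p) b * Rr U (a1 p) d) * (XX p \<psi> b b' * XX p \<psi> d d' * (if b' = d' then wt (a2 p) b' else 0)))"

lemma h_form: "(xi N p (mat_vec N (gate_op N c t U V) \<psi>))\<^sup>2 =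
  (\<Sum>b\<in>UNIV. \<Sum>b'\<in>UNIV. \<Sum>d\<in>UNIV. \<Sum>d'\<in>UNIV.
     (Rr U (a1 p) b * Rr U (a1 p) d * XX p \<psi> b b' * XX p \<psi> d d') * (Rr V (a2 p) b' * Rr V (a2 p) d'))"
  unfolding xi_gate power_mult_distrib sgr_sq a1_def a2_def XX_def
  by (simp add: sq_expand)

lemma inner_integrable: "integrable \<mu> (\<lambda>V. (xi N p (mat_vec N (gate_op N c t U V) \<psi>))\<^sup>2)"
  unfolding h_form by (simp add: int_RR)

lemma inner_int: "(\<integral>V. (xi N p (mat_vec N (gate_op N c t U V) \<psi>))\<^sup>2 \<partial>\<mu>) = kU p \<psi> U"
proof -
  have "(\<integral>V. (xi N p (mat_vec N (gate_op N c t U V) \<psi>))\<^sup>2 \<partial>\<mu>) =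
    (\<Sum>b\<in>UNIV. \<Sum>b'\<in>UNIV. \<Sum>d\<in>UNIV. \<Sum>d'\<in>UNIV.
     (Rr U (a1 p) b * Rr U (a1 p) d * XX p \<psi> b b' * XX p \<psi> d d') * (\<integral>V. Rr V (a2 p) b' * Rr V (a2 p) d' \<partial>\<mu>))"
    unfolding h_form
    by (simp add: integral_sum integrable_sum integrable_mult_right int_RR)
  then show ?thesis unfolding kU_def haar_int by (simp add: mult_ac)
qed

lemma kU_integrable: "integrable \<mu> (kU p \<psi>)"
  unfolding kU_def by (simp add: int_RR)

lemma kU_int: "(\<integral>U. kU p \<psi> U \<partial>\<mu>) = (\<Sum>b\<in>UNIV. \<Sum>b'\<in>UNIV. wt (a1 p) b * wt (a2 p) b' * (XX p \<psi> b b')\<^sup>2)"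
proof -
  have "(\<integral>U. kU p \<psi> U \<partial>\<mu>) = (\<Sum>b\<in>UNIV. \<Sum>b'\<in>UNIV. \<Sum>d\<in>UNIV. \<Sum>d'\<in>UNIV.
      (\<integral>U. Rr U (a1 p) b * Rr U (a1 p) d \<partial>\<mu>) * (XX p \<psi> b b' * XX p \<psi> d d' * (if b' = d' then wt (a2 p) b' else 0)))"
    unfolding kU_def by (simp add: integral_sum integrable_sum integrable_mult_left int_RR)
  also have "\<dots> = (\<Sum>b\<in>UNIV. \<Sum>b'\<in>UNIV. \<Sum>d\<in>UNIV. \<Sum>d'\<in>UNIV.
      (if b = d then wt (a1 p) d else 0) * (XX p \<psi> b b' * XX p \<psi> d d') * (if b' = d' then wt (a2 p) d' else 0))"
    unfolding haar_int by (intro sum.cong refl) (auto simp: mult_ac)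
  also have "\<dots> = (\<Sum>b\<in>UNIV. \<Sum>b'\<in>UNIV. wt (a1 p) b * wt (a2 p) b' * (XX p \<psi> b b')\<^sup>2)"
    unfolding delta2 by (simp add: power2_eq_square mult_ac)
  finally show ?thesis .
qed

lemma part3:
  assumes p: "p \<in> paulis N"
  shows "(\<integral>U. (\<integral>V. (xi N p (mat_vec N (gate_op N c t U V) \<psi>))\<^sup>2 \<partial>\<mu>) \<partial>\<mu>)
     = (\<Sum>q\<in>paulis N. Pct N c t q p * (xi N q \<psi>)\<^sup>2)"
  unfolding inner_int kU_int Pct_sum_q[OF p] a1_def a2_def XX_def ..

lemma kU_nonneg: "kU p \<psi> U \<ge> 0"
  unfolding inner_int[symmetric] by (rule integral_nonneg_AE) simp

lemma part3_nn:
  assumes p: "p \<in> paulis N"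
  shows "(\<integral>\<^sup>+U. (\<integral>\<^sup>+V. ennreal ((xi N p (mat_vec N (gate_op N c t U V) \<psi>))\<^sup>2) \<partial>\<mu>) \<partial>\<mu>)
     = ennreal (\<Sum>q\<in>paulis N. Pct N c t q p * (xi N q \<psi>)\<^sup>2)"
proof -
  have "(\<integral>\<^sup>+V. ennreal ((xi N p (mat_vec N (gate_op N c t U V) \<psi>))\<^sup>2) \<partial>\<mu>) = ennreal (kU p \<psi> U)" for U
    unfolding inner_int[symmetric] by (rule nn_integral_eq_integral[OF inner_integrable]) simp
  then have "(\<integral>\<^sup>+U. (\<integral>\<^sup>+V. ennreal ((xi N p (mat_vec N (gate_op N c t U V) \<psi>))\<^sup>2) \<partial>\<mu>) \<partial>\<mu>)
     = (\<integral>\<^sup>+U. ennreal (kU p \<psi> U) \<partial>\<mu>)" by simp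
  also have "\<dots> = ennreal (\<integral>U. kU p \<psi> U \<partial>\<mu>)"
    by (rule nn_integral_eq_integral[OF kU_integrable]) (simp add: kU_nonneg)
  also have "\<dots> = ennreal (\<Sum>q\<in>paulis N. Pct N c t q p * (xi N q \<psi>)\<^sup>2)"
    using part3[OF p] inner_int by simp
  finally show ?thesis .
qed

end



lemma meas_cnj[measurable]: "cnj \<in> borel_measurable borel"
  by (rule borel_measurable_continuous_onI) (intro continuous_intros)

lemma meas_entry[measurable]: "(\<lambda>U::mat2. U $ i $ j) \<in> borel_measurable borel"
  by (rule borel_measurable_continuous_onI) (intro continuous_intros)

lemma sets_gateM: "sets \<mu> = sets borel \<Longrightarrow> sets (gateM N \<mu>) = sets (count_space UNIV \<Otimes>\<^sub>M (borel \<Otimes>\<^sub>M borel))"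
  unfolding gateM_def by (intro sets_pair_measure_cong) simp_all

lemma meas_gate_entry_ct:
  "(\<lambda>y::mat2\<times>mat2. gate_op N c t (fst y) (snd y) b b') \<in> borel_measurable (borel \<Otimes>\<^sub>M borel)"
  unfolding gate_op_def op_mult_def single_op_def by measurable

lemma meas_gate_entry:
  assumes "sets \<mu> = sets borel"
  shows "(\<lambda>g. gate_op N (fst (fst g)) (snd (fst g)) (fst (snd g)) (snd (snd g)) b b') \<in> borel_measurable (gateM N \<mu>)"
proof -
  have "(\<lambda>g. gate_op N (fst (fst g)) (snd (fst g)) (fst (snd g)) (snd (snd g)) b b') \<in> borel_measurable (count_space UNIV \<Otimes>\<^sub>M (borel \<Otimes>\<^sub>M borel))"
    by (rule measurable_pair_measure_countable1) (simp_all add: meas_gate_entry_ct)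
  then show ?thesis using measurable_cong_sets[OF sets_gateM[OF assms] refl] by blast
qed

lemma meas_xi:
  assumes [measurable]: "\<And>b. (\<lambda>x. f x b) \<in> borel_measurable M"
  shows "(\<lambda>x. xi N p (f x)) \<in> borel_measurable M"
  unfolding xi_def by measurable



lemma pairs_ctN: "(c, t) \<in> pairs N \<Longrightarrow> ctN N c t"
  unfolding pairs_def ctN_def by auto

lemma finite_pairs: "finite (pairs N)"
  by (rule finite_subset[of _ "{1..N} \<times> {1..N}"]) (auto simp: pairs_def)

lemma card_pairs: "card (pairs N) = N * (N - 1)"
proof -
  have "pairs N = Sigma {1..N} (\<lambda>c. {1..N} - {c})" by (auto simp: pairs_def)
  then have "card (pairs N) = (\<Sum>c\<in>{1..N}. card ({1..N} - {c}))" by (simp add: card_SigmaI)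
  also have "\<dots> = (\<Sum>c\<in>{1..N}. N - 1)" by (intro sum.cong refl) simp
  also have "\<dots> = N * (N - 1)" by simp
  finally show ?thesis .
qed

lemma pairs_ne: "N \<ge> 2 \<Longrightarrow> pairs N \<noteq> {}"
  by (auto simp: pairs_def) (rule exI[of _ 1], rule exI[of _ 2], simp)

lemma prob_gateM: "N \<ge> 2 \<Longrightarrow> prob_space \<mu> \<Longrightarrow> prob_space (gateM N \<mu>)"
  unfolding gateM_def by (intro prob_space_pair prob_space_measure_pmf)

lemma NN_nonneg: "0 \<le> real N * (real N - 1)"
  by (cases N) auto

lemma Ptrans_nonneg: "Ptrans N q p \<ge> 0"
  unfolding Ptrans_def using NN_nonneg[of N]
  by (intro mult_nonneg_nonneg sum_nonneg) (auto simp: ctN.Pct_nonneg[OF pairs_ctN] split: prod.splits)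

lemma Ptrans_sum: "N \<ge> 2 \<Longrightarrow> (\<Sum>q\<in>paulis N. Ptrans N q p * f q) =
    (\<Sum>ct\<in>pairs N. (\<Sum>q\<in>paulis N. Pct N (fst ct) (snd ct) q p * f q)) / real (card (pairs N))"
  unfolding Ptrans_def card_pairs
  by (simp add: sum_distrib_right sum_divide_distrib split_def sum_distrib_left mult_ac of_nat_diff)
     (rule sum.swap)

definition gentry :: "nat \<Rightarrow> (nat \<Rightarrow> bool) \<Rightarrow> (nat \<Rightarrow> bool) \<Rightarrow> gate \<Rightarrow> complex" where
  "gentry N b b' g = gate_op N (fst (fst g)) (snd (fst g)) (fst (snd g)) (snd (snd g)) b b'"

lemma apply_gate_gentry: "apply_gate N g \<psi> b = (\<Sum>b'\<in>bits N. gentry N b b' g * \<psi> b')"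
  unfolding apply_gate_def mat_vec_def gentry_def ..

lemma meas_gentry: "sets \<mu> = sets borel \<Longrightarrow> gentry N b b' \<in> borel_measurable (gateM N \<mu>)"
  unfolding gentry_def by (rule meas_gate_entry)

lemma step_nn:
  assumes N: "N \<ge> 2" and H: "is_haar \<mu>" and p: "p \<in> paulis N"
  shows "(\<integral>\<^sup>+g. ennreal ((xi N p (apply_gate N g \<psi>))\<^sup>2) \<partial>gateM N \<mu>) = ennreal (\<Sum>q\<in>paulis N. Ptrans N q p * (xi N q \<psi>)\<^sup>2)"
proof -
  interpret haar \<mu> by (rule haar.intro[OF H])
  interpret mu: prob_space \<mu> by (rule prob)
  interpret mm: prob_space "\<mu> \<Otimes>\<^sub>M \<mu>" by (intro prob_space_pair prob)
  note [measurable] = meas_gentry[OF sets_mu]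
  let ?f = "\<lambda>g. ennreal ((xi N p (apply_gate N g \<psi>))\<^sup>2)"
  have mf: "?f \<in> borel_measurable (gateM N \<mu>)"
  proof (intro measurable_compose[OF _ measurable_ennreal] borel_measurable_power meas_xi)
    fix b show "(\<lambda>g. apply_gate N g \<psi> b) \<in> borel_measurable (gateM N \<mu>)"
      unfolding apply_gate_gentry by measurable
  qed
  then have mf': "?f \<in> borel_measurable (measure_pmf (pmf_of_set (pairs N)) \<Otimes>\<^sub>M (\<mu> \<Otimes>\<^sub>M \<mu>))"
    unfolding gateM_def .
  have "(\<integral>\<^sup>+g. ?f g \<partial>gateM N \<mu>) = (\<integral>\<^sup>+ct. (\<integral>\<^sup>+UV. ?f (ct, UV) \<partial>(\<mu> \<Otimes>\<^sub>M \<mu>)) \<partial>measure_pmf (pmf_of_set (pairs N)))"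
    unfolding gateM_def by (rule mm.nn_integral_fst[symmetric, OF mf'])
  also have "\<dots> = (\<Sum>ct\<in>pairs N. (\<integral>\<^sup>+UV. ?f (ct, UV) \<partial>(\<mu> \<Otimes>\<^sub>M \<mu>))) / card (pairs N)"
    by (rule nn_integral_pmf_of_set[OF pairs_ne[OF N] finite_pairs])
  also have "\<dots> = (\<Sum>ct\<in>pairs N. ennreal (\<Sum>q\<in>paulis N. Pct N (fst ct) (snd ct) q p * (xi N q \<psi>)\<^sup>2)) / card (pairs N)"
  proof (intro arg_cong2[where f = "(/)"] sum.cong refl)
    fix ct assume ct: "ct \<in> pairs N"
    obtain c t where cte: "ct = (c, t)" by (cases ct)
    interpret p3 N c t \<mu> by (intro p3.intro pairs_ctN) (use ct cte in simp, rule haar_axioms)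
    have m2: "(\<lambda>UV. ?f (ct, UV)) \<in> borel_measurable (\<mu> \<Otimes>\<^sub>M \<mu>)"
      by (rule measurable_Pair2[OF mf']) simp
    have "(\<integral>\<^sup>+UV. ?f (ct, UV) \<partial>(\<mu> \<Otimes>\<^sub>M \<mu>)) = (\<integral>\<^sup>+U. \<integral>\<^sup>+V. ?f (ct, (U, V)) \<partial>\<mu> \<partial>\<mu>)"
      by (rule mu.nn_integral_fst[symmetric, OF m2])
    also have "\<dots> = ennreal (\<Sum>q\<in>paulis N. Pct N c t q p * (xi N q \<psi>)\<^sup>2)"
      unfolding cte apply_gate_def using part3_nn[OF p] by simp
    finally show "(\<integral>\<^sup>+UV. ?f (ct, UV) \<partial>(\<mu> \<Otimes>\<^sub>M \<mu>)) = ennreal (\<Sum>q\<in>paulis N. Pct N (fst ct) (snd ct) q p * (xi N q \<psi>)\<^sup>2)"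
      using cte by simp
  qed
  also have "\<dots> = ennreal ((\<Sum>ct\<in>pairs N. (\<Sum>q\<in>paulis N. Pct N (fst ct) (snd ct) q p * (xi N q \<psi>)\<^sup>2)) / real (card (pairs N)))"
  proof -
    have nn: "\<And>ct. ct \<in> pairs N \<Longrightarrow> 0 \<le> (\<Sum>q\<in>paulis N. Pct N (fst ct) (snd ct) q p * (xi N q \<psi>)\<^sup>2)"
      by (intro sum_nonneg mult_nonneg_nonneg) (auto intro: ctN.Pct_nonneg[OF pairs_ctN])
    have cp: "0 < real (card (pairs N))" using pairs_ne[OF N] finite_pairs card_gt_0_iff by auto
    show ?thesis
      using nn cp by (simp add: sum_ennreal ennreal_of_nat_eq_real_of_nat divide_ennreal sum_nonneg)
  qed
  also have "\<dots> = ennreal (\<Sum>q\<in>paulis N. Ptrans N q p * (xi N q \<psi>)\<^sup>2)"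
    using Ptrans_sum[OF N] by simp
  finally show ?thesis .
qed



lemma psi_cong: "(\<And>k. k < n \<Longrightarrow> \<omega> k = \<omega>' k) \<Longrightarrow> psi N \<psi>0 \<omega> n = psi N \<psi>0 \<omega>' n"
  by (induction n) auto

locale circ =
  fixes N :: nat and \<mu> :: "mat2 measure" and \<psi>0 :: state
  assumes N: "N \<ge> 2" and H: "is_haar \<mu>"
begin

sublocale haar \<mu> by (rule haar.intro[OF H])

abbreviation "M' \<equiv> (\<lambda>_::nat. gateM N \<mu>)"

sublocale P: product_prob_space M' "UNIV :: nat set" by (intro product_prob_spaceI prob_gateM N prob)

lemma circM_eq: "circM N \<mu> = PiM UNIV M'" unfolding circM_def ..

lemma psi_meas: "{..<n} \<subseteq> J \<Longrightarrow> (\<lambda>\<omega>. psi N \<psi>0 \<omega> n b) \<in> borel_measurable (PiM J M')"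
proof (induction n arbitrary: b)
  case 0 then show ?case by simp
next
  case (Suc n)
  note [measurable] = meas_gentry[OF sets_mu]
  have nI: "n \<in> J" using Suc.prems by auto
  have sub: "{..<n} \<subseteq> J" using Suc.prems by auto
  have IH[measurable]: "\<And>b. (\<lambda>\<omega>. psi N \<psi>0 \<omega> n b) \<in> borel_measurable (PiM J M')" using Suc.IH[OF sub] .
  have g[measurable]: "\<And>b b'. (\<lambda>\<omega>. gentry N b b' (\<omega> n)) \<in> borel_measurable (PiM J M')"
    by (rule measurable_compose[OF measurable_component_singleton[OF nI]]) measurable
  show ?case unfolding psi.simps apply_gate_gentry by measurable
qed

definition f :: "nat \<Rightarrow> (nat \<Rightarrow> pauli) \<Rightarrow> (nat \<Rightarrow> gate) \<Rightarrow> ennreal" where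
  "f n p \<omega> = ennreal ((xi N p (psi N \<psi>0 \<omega> n))\<^sup>2)"

lemma f_meas: "{..<n} \<subseteq> J \<Longrightarrow> f n p \<in> borel_measurable (PiM J M')"
  unfolding f_def by (intro measurable_compose[OF _ measurable_ennreal] borel_measurable_power meas_xi psi_meas)

definition E :: "nat \<Rightarrow> (nat \<Rightarrow> pauli) \<Rightarrow> ennreal" where
  "E n p = (\<integral>\<^sup>+\<omega>. f n p \<omega> \<partial>circM N \<mu>)"

lemma E_restrict: "E n p = (\<integral>\<^sup>+\<omega>. f n p \<omega> \<partial>PiM {..<n} M')"
proof -
  have "(\<integral>\<^sup>+\<omega>. f n p \<omega> \<partial>PiM {..<n} M') = (\<integral>\<^sup>+\<omega>. f n p \<omega> \<partial>distr (PiM UNIV M') (PiM {..<n} M') (\<lambda>x. restrict x {..<n}))"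
    using P.distr_PiM_restrict_finite[of "{..<n}"] by simp
  also have "\<dots> = (\<integral>\<^sup>+\<omega>. f n p (restrict \<omega> {..<n}) \<partial>PiM UNIV M')"
    by (rule nn_integral_distr) (simp_all add: measurable_restrict_subset f_meas)
  also have "\<dots> = (\<integral>\<^sup>+\<omega>. f n p \<omega> \<partial>PiM UNIV M')"
  proof (intro nn_integral_cong)
    fix \<omega> :: "nat \<Rightarrow> gate"
    have "psi N \<psi>0 (restrict \<omega> {..<n}) n = psi N \<psi>0 \<omega> n" by (rule psi_cong) simp
    then show "f n p (restrict \<omega> {..<n}) = f n p \<omega>" unfolding f_def by simp
  qed
  finally show ?thesis unfolding E_def circM_eq ..
qed

lemma E_Suc: assumes p: "p \<in> paulis N"
  shows "E (Suc n) p = (\<Sum>q\<in>paulis N. ennreal (Ptrans N q p) * E n q)"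
proof -
  have "E (Suc n) p = (\<integral>\<^sup>+\<omega>. f (Suc n) p \<omega> \<partial>PiM (insert n {..<n}) M')"
    unfolding E_restrict lessThan_Suc ..
  also have "\<dots> = (\<integral>\<^sup>+x. \<integral>\<^sup>+y. f (Suc n) p (x(n := y)) \<partial>gateM N \<mu> \<partial>PiM {..<n} M')"
    by (rule P.product_nn_integral_insert) (auto intro: f_meas)
  also have "\<dots> = (\<integral>\<^sup>+x. ennreal (\<Sum>q\<in>paulis N. Ptrans N q p * (xi N q (psi N \<psi>0 x n))\<^sup>2) \<partial>PiM {..<n} M')"
  proof (rule nn_integral_cong)
    fix x
    have "\<And>y. psi N \<psi>0 (x(n := y)) n = psi N \<psi>0 x n" by (rule psi_cong) auto
    then have "\<And>y. f (Suc n) p (x(n := y)) = ennreal ((xi N p (apply_gate N y (psi N \<psi>0 x n)))\<^sup>2)"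
      unfolding f_def by simp
    then show "(\<integral>\<^sup>+y. f (Suc n) p (x(n := y)) \<partial>gateM N \<mu>) = ennreal (\<Sum>q\<in>paulis N. Ptrans N q p * (xi N q (psi N \<psi>0 x n))\<^sup>2)"
      using step_nn[OF N H p] by simp
  qed
  also have "\<dots> = (\<integral>\<^sup>+x. (\<Sum>q\<in>paulis N. ennreal (Ptrans N q p) * f n q x) \<partial>PiM {..<n} M')"
  proof (intro nn_integral_cong)
    fix x
    have e: "\<And>q. ennreal (Ptrans N q p) * f n q x = ennreal (Ptrans N q p * (xi N q (psi N \<psi>0 x n))\<^sup>2)"
      unfolding f_def by (simp add: ennreal_mult Ptrans_nonneg)
    show "ennreal (\<Sum>q\<in>paulis N. Ptrans N q p * (xi N q (psi N \<psi>0 x n))\<^sup>2) = (\<Sum>q\<in>paulis N. ennreal (Ptrans N q p) * f n q x)"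
      unfolding e by (rule sum_ennreal[symmetric]) (simp add: Ptrans_nonneg)
  qed
  also have "\<dots> = (\<Sum>q\<in>paulis N. ennreal (Ptrans N q p) * E n q)"
  proof -
    have fm[measurable]: "\<And>q. f n q \<in> borel_measurable (PiM {..<n} M')" by (rule f_meas) simp
    have "(\<integral>\<^sup>+x. (\<Sum>q\<in>paulis N. ennreal (Ptrans N q p) * f n q x) \<partial>PiM {..<n} M')
       = (\<Sum>q\<in>paulis N. (\<integral>\<^sup>+x. ennreal (Ptrans N q p) * f n q x \<partial>PiM {..<n} M'))"
      by (rule nn_integral_sum) measurable
    also have "\<dots> = (\<Sum>q\<in>paulis N. ennreal (Ptrans N q p) * E n q)"
      unfolding E_restrict by (intro sum.cong refl nn_integral_cmult fm)
    finally show ?thesis .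
  qed
  finally show ?thesis .
qed

lemma E_0: "E 0 p = ennreal ((xi N p \<psi>0)\<^sup>2)"
  unfolding E_def f_def by (simp add: P.emeasure_space_1 circM_eq)

lemma E_fin: "p \<in> paulis N \<Longrightarrow> E n p < \<top>"
proof (induction n arbitrary: p)
  case 0 then show ?case by (simp add: E_0)
next
  case (Suc n)
  then show ?case unfolding E_Suc[OF Suc.prems]
    using Suc.IH by (auto simp: ennreal_mult_less_top finite_paulis)
qed

lemma Exi2_E: assumes p: "p \<in> paulis N" shows "E n p = ennreal (Exi2 N \<mu> \<psi>0 n p)"
proof -
  have m: "(\<lambda>\<omega>. (xi N p (psi N \<psi>0 \<omega> n))\<^sup>2) \<in> borel_measurable (circM N \<mu>)"
    unfolding circM_eq by (intro borel_measurable_power meas_xi psi_meas) simp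
  have "Exi2 N \<mu> \<psi>0 n p = enn2real (E n p)"
    unfolding Exi2_def E_def f_def by (rule integral_eq_nn_integral[OF m]) simp
  then show ?thesis using E_fin[OF p] by simp
qed

lemma Exi2_nonneg: "Exi2 N \<mu> \<psi>0 n p \<ge> 0"
  unfolding Exi2_def by (rule integral_nonneg_AE) simp

lemma part2: assumes p: "p \<in> paulis N"
  shows "Exi2 N \<mu> \<psi>0 (Suc n) p = (\<Sum>q\<in>paulis N. Ptrans N q p * Exi2 N \<mu> \<psi>0 n q)"
proof -
  have "ennreal (Exi2 N \<mu> \<psi>0 (Suc n) p) = (\<Sum>q\<in>paulis N. ennreal (Ptrans N q p) * ennreal (Exi2 N \<mu> \<psi>0 n q))"
    using E_Suc[OF p] Exi2_E p by simp
  also have "\<dots> = ennreal (\<Sum>q\<in>paulis N. Ptrans N q p * Exi2 N \<mu> \<psi>0 n q)"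
  proof -
    have e: "\<And>q. ennreal (Ptrans N q p) * ennreal (Exi2 N \<mu> \<psi>0 n q) = ennreal (Ptrans N q p * Exi2 N \<mu> \<psi>0 n q)"
      by (simp add: ennreal_mult Ptrans_nonneg Exi2_nonneg)
    show ?thesis unfolding e by (rule sum_ennreal) (simp add: Ptrans_nonneg Exi2_nonneg)
  qed
  finally show ?thesis
    by (rule ennreal_inj[THEN iffD1, rotated 2]) (simp_all add: Exi2_nonneg Ptrans_nonneg sum_nonneg)
qed

lemma Exi2_0: "Exi2 N \<mu> \<psi>0 0 p = (xi N p \<psi>0)\<^sup>2"
  unfolding Exi2_def by (simp add: P.P.prob_space circM_eq)

end



definition PS :: "nat set \<Rightarrow> (nat \<Rightarrow> pauli) set" where
  "PS I = {p. \<forall>i. i \<notin> I \<longrightarrow> p i = P0}"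

lemma sum_prod_PS:
  fixes g :: "nat \<Rightarrow> pauli \<Rightarrow> 'b::comm_ring_1"
  assumes "finite I"
  shows "(\<Sum>p\<in>PS I. \<Prod>i\<in>I. g i (p i)) = (\<Prod>i\<in>I. \<Sum>a\<in>UNIV. g i a)"
  using assms
proof (induction I rule: finite_induct)
  case empty
  have "PS {} = {\<lambda>_. P0}" by (auto simp: PS_def)
  then show ?case by simp
next
  case (insert j I)
  have bij: "bij_betw (\<lambda>(p, a). p(j := a)) (PS I \<times> UNIV) (PS (insert j I))"
    apply (rule bij_betwI[where g = "\<lambda>p. (p(j := P0), p j)"])
    using insert.hyps by (auto simp: PS_def)
  have "(\<Sum>p\<in>PS (insert j I). \<Prod>i\<in>insert j I. g i (p i))
      = (\<Sum>z\<in>PS I \<times> UNIV. (\<lambda>p. \<Prod>i\<in>insert j I. g i (p i)) ((\<lambda>(p, a). p(j := a)) z))"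
    by (rule sum.reindex_bij_betw[OF bij, symmetric])
  also have "\<dots> = (\<Sum>z\<in>PS I \<times> UNIV. g j (snd z) * (\<Prod>i\<in>I. g i (fst z i)))"
  proof (intro sum.cong refl)
    fix z assume "z \<in> PS I \<times> (UNIV :: pauli set)"
    have "(\<Prod>i\<in>I. g i (((fst z)(j := snd z)) i)) = (\<Prod>i\<in>I. g i (fst z i))"
      using insert.hyps by (intro prod.cong refl) auto
    then show "(\<lambda>p. \<Prod>i\<in>insert j I. g i (p i)) ((\<lambda>(p, a). p(j := a)) z) = g j (snd z) * (\<Prod>i\<in>I. g i (fst z i))"
      using insert.hyps by (simp add: split_def)
  qed
  also have "\<dots> = (\<Sum>p\<in>PS I. \<Sum>a\<in>UNIV. g j a * (\<Prod>i\<in>I. g i (p i)))"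
    by (simp add: sum.cartesian_product')
  also have "\<dots> = (\<Sum>a\<in>UNIV. g j a) * (\<Sum>p\<in>PS I. \<Prod>i\<in>I. g i (p i))"
    by (simp add: sum_distrib_left sum_distrib_right mult_ac)
  also have "\<dots> = (\<Prod>i\<in>insert j I. \<Sum>a\<in>UNIV. g i a)"
    using insert by simp
  finally show ?case .
qed

lemma paulis_PS: "paulis N = PS {1..N}"
  unfolding paulis_def PS_def ..

lemma sigma_pair_sum: "(\<Sum>a\<in>UNIV. sigma a u v * cnj (sigma a w z)) = (if u = w \<and> v = z then 2 else 0)"
  by (cases u; cases v; cases w; cases z) (simp_all add: sum_pauli)

lemma pauli_pair_sum:
  assumes "b \<in> bits N" "b' \<in> bits N" "e \<in> bits N" "e' \<in> bits N"
  shows "(\<Sum>p\<in>paulis N. pauli_op N p b b' * cnj (pauli_op N p e e')) = (if b = e \<and> b' = e' then 2 ^ N else 0)"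
proof -
  have "(\<Sum>p\<in>paulis N. pauli_op N p b b' * cnj (pauli_op N p e e'))
      = (\<Sum>p\<in>PS {1..N}. \<Prod>i\<in>{1..N}. sigma (p i) (b i) (b' i) * cnj (sigma (p i) (e i) (e' i)))"
    unfolding paulis_PS pauli_op_def by (simp add: prod.distrib cnj_prod)
  also have "\<dots> = (\<Prod>i\<in>{1..N}. if b i = e i \<and> b' i = e' i then 2 else 0)"
    by (subst sum_prod_PS) (simp_all add: sigma_pair_sum)
  also have "\<dots> = (if b = e \<and> b' = e' then 2 ^ N else 0)"
  proof (cases "b = e \<and> b' = e'")
    case True then show ?thesis by simp
  next
    case False
    then obtain i where "b i \<noteq> e i \<or> b' i \<noteq> e' i" by (auto simp: fun_eq_iff)
    moreover then have "i \<in> {1..N}" using assms by (auto simp: bits_def)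
    ultimately show ?thesis using False by (auto intro!: prod_zero)
  qed
  finally show ?thesis .
qed

lemma Tc_real: "cnj (Tc N p \<psi>) = Tc N p \<psi>"
proof -
  have c: "cnj (pauli_op N p b b') = pauli_op N p b' b" for b b'
    unfolding pauli_op_def by (simp add: cnj_prod sigma_cnj)
  have "cnj (Tc N p \<psi>) = (\<Sum>b\<in>bits N. \<Sum>b'\<in>bits N. pauli_op N p b' b * (\<psi> b * cnj (\<psi> b')))"
    unfolding Tc_def by (simp add: c mult_ac)
  also have "\<dots> = Tc N p \<psi>" unfolding Tc_def by (rule sum.swap)
  finally show ?thesis .
qed

lemma sum_swap_p4: "(\<Sum>p\<in>P. \<Sum>b\<in>A. \<Sum>b'\<in>B. \<Sum>e\<in>C. \<Sum>e'\<in>D. f p b b' e e') =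
   (\<Sum>b\<in>A. \<Sum>b'\<in>B. \<Sum>e\<in>C. \<Sum>e'\<in>D. \<Sum>p\<in>P. f p b b' e e')"
proof -
  have "(\<Sum>p\<in>P. \<Sum>b\<in>A. \<Sum>b'\<in>B. \<Sum>e\<in>C. \<Sum>e'\<in>D. f p b b' e e') =
     (\<Sum>b\<in>A. \<Sum>p\<in>P. \<Sum>b'\<in>B. \<Sum>e\<in>C. \<Sum>e'\<in>D. f p b b' e e')" by (rule sum.swap)
  also have "\<dots> = (\<Sum>b\<in>A. \<Sum>b'\<in>B. \<Sum>p\<in>P. \<Sum>e\<in>C. \<Sum>e'\<in>D. f p b b' e e')"
    by (rule sum.cong[OF refl], rule sum.swap)
  also have "\<dots> = (\<Sum>b\<in>A. \<Sum>b'\<in>B. \<Sum>e\<in>C. \<Sum>p\<in>P. \<Sum>e'\<in>D. f p b b' e e')"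
    by (rule sum.cong[OF refl], rule sum.cong[OF refl], rule sum.swap)
  also have "\<dots> = (\<Sum>b\<in>A. \<Sum>b'\<in>B. \<Sum>e\<in>C. \<Sum>e'\<in>D. \<Sum>p\<in>P. f p b b' e e')"
    by (rule sum.cong[OF refl], rule sum.cong[OF refl], rule sum.cong[OF refl], rule sum.swap)
  finally show ?thesis .
qed

lemma base_sum:
  assumes "normalized N \<psi>"
  shows "(\<Sum>p\<in>paulis N. (xi N p \<psi>)\<^sup>2) = 1"
proof -
  have "(\<Sum>p\<in>paulis N. Tc N p \<psi> * cnj (Tc N p \<psi>)) =
     (\<Sum>p\<in>paulis N. \<Sum>b\<in>bits N. \<Sum>b'\<in>bits N. \<Sum>e\<in>bits N. \<Sum>e'\<in>bits N.
        (pauli_op N p b b' * cnj (pauli_op N p e e')) * (\<psi> b' * cnj (\<psi> b) * cnj (\<psi> e') * \<psi> e))"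
  proof (intro sum.cong refl)
    fix p
    have "Tc N p \<psi> * cnj (Tc N p \<psi>) = (\<Sum>b\<in>bits N. \<Sum>b'\<in>bits N. \<Sum>e\<in>bits N. \<Sum>e'\<in>bits N.
        (pauli_op N p b b' * (\<psi> b' * cnj (\<psi> b))) * cnj (pauli_op N p e e' * (\<psi> e' * cnj (\<psi> e))))"
      unfolding Tc_def cnj_sum sum_distrib_right by (simp only: sum_distrib_left)
    also have "\<dots> = (\<Sum>b\<in>bits N. \<Sum>b'\<in>bits N. \<Sum>e\<in>bits N. \<Sum>e'\<in>bits N.
        (pauli_op N p b b' * cnj (pauli_op N p e e')) * (\<psi> b' * cnj (\<psi> b) * cnj (\<psi> e') * \<psi> e))"
      by (intro sum.cong refl) (simp add: mult_ac)
    finally show "Tc N p \<psi> * cnj (Tc N p \<psi>) = (\<Sum>b\<in>bits N. \<Sum>b'\<in>bits N. \<Sum>e\<in>bits N. \<Sum>e'\<in>bits N.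
        (pauli_op N p b b' * cnj (pauli_op N p e e')) * (\<psi> b' * cnj (\<psi> b) * cnj (\<psi> e') * \<psi> e))" .
  qed
  also have "\<dots> = (\<Sum>b\<in>bits N. \<Sum>b'\<in>bits N. \<Sum>e\<in>bits N. \<Sum>e'\<in>bits N.
        (\<Sum>p\<in>paulis N. pauli_op N p b b' * cnj (pauli_op N p e e')) * (\<psi> b' * cnj (\<psi> b) * cnj (\<psi> e') * \<psi> e))"
    by (subst sum_swap_p4) (simp only: sum_distrib_right)
  also have "\<dots> = (\<Sum>b\<in>bits N. \<Sum>b'\<in>bits N. \<Sum>e\<in>bits N. \<Sum>e'\<in>bits N.
        (if e = b \<and> e' = b' then 2 ^ N * (\<psi> b' * cnj (\<psi> b) * cnj (\<psi> b') * \<psi> b) else 0))"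
    by (intro sum.cong refl) (auto simp: pauli_pair_sum)
  also have "\<dots> = (\<Sum>b\<in>bits N. \<Sum>b'\<in>bits N. 2 ^ N * (\<psi> b' * cnj (\<psi> b) * cnj (\<psi> b') * \<psi> b))"
  proof (intro sum.cong refl)
    fix b b' assume bb: "b \<in> bits N" "b' \<in> bits N"
    have e: "\<And>e e'. (if e = b \<and> e' = b' then 2 ^ N * (\<psi> b' * cnj (\<psi> b) * cnj (\<psi> b') * \<psi> b) else 0)
      = (if e' = b' then (if e = b then 2 ^ N * (\<psi> b' * cnj (\<psi> b) * cnj (\<psi> b') * \<psi> b) else 0) else 0)" by simp
    show "(\<Sum>e\<in>bits N. \<Sum>e'\<in>bits N. (if e = b \<and> e' = b' then 2 ^ N * (\<psi> b' * cnj (\<psi> b) * cnj (\<psi> b') * \<psi> b) else 0))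
       = 2 ^ N * (\<psi> b' * cnj (\<psi> b) * cnj (\<psi> b') * \<psi> b)"
      unfolding e using bb by (simp add: sum.delta finite_bits)
  qed
  also have "\<dots> = 2 ^ N * ((\<Sum>b\<in>bits N. complex_of_real ((cmod (\<psi> b))\<^sup>2)) * (\<Sum>b\<in>bits N. complex_of_real ((cmod (\<psi> b))\<^sup>2)))"
    unfolding complex_norm_square by (simp add: sum_distrib_left sum_distrib_right mult_ac)
  also have "\<dots> = 2 ^ N"
  proof -
    have "(\<Sum>b\<in>bits N. complex_of_real ((cmod (\<psi> b))\<^sup>2)) = complex_of_real (\<Sum>b\<in>bits N. (cmod (\<psi> b))\<^sup>2)"
      by (rule of_real_sum[symmetric])
    also have "\<dots> = 1" using assms unfolding normalized_def by simp
    finally show ?thesis by simp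
  qed
  finally have S: "(\<Sum>p\<in>paulis N. Tc N p \<psi> * cnj (Tc N p \<psi>)) = 2 ^ N" .
  have sq: "(Re (Tc N p \<psi>))\<^sup>2 = Re (Tc N p \<psi> * cnj (Tc N p \<psi>))" for p
    using Tc_real[of N p \<psi>] by (simp add: power2_eq_square complex_eq_iff)
  have "(\<Sum>p\<in>paulis N. (xi N p \<psi>)\<^sup>2) = (2 powr (- real N / 2))\<^sup>2 * Re (\<Sum>p\<in>paulis N. Tc N p \<psi> * cnj (Tc N p \<psi>))"
    unfolding xi_Tc power_mult_distrib sq Re_sum sum_distrib_left ..
  also have "\<dots> = (2 powr (- real N / 2))\<^sup>2 * 2 ^ N" unfolding S by simp
  also have "\<dots> = 1"
  proof -
    have "(2 powr (- real N / 2))\<^sup>2 = (2::real) powr (- real N)"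
      by (subst powr_power) simp_all
    also have "\<dots> = inverse (2 ^ N)" by (simp add: powr_minus powr_realpow)
    finally show ?thesis by simp
  qed
  finally show ?thesis .
qed



lemma stoch:
  assumes N: "N \<ge> 2" and q: "q \<in> paulis N"
  shows "(\<Sum>p\<in>paulis N. Ptrans N q p) = 1"
proof -
  have "(\<Sum>p\<in>paulis N. Ptrans N q p) = 1 / (real N * (real N - 1)) * (\<Sum>ct\<in>pairs N. \<Sum>p\<in>paulis N. Pct N (fst ct) (snd ct) q p)"
    unfolding Ptrans_def by (simp add: sum_distrib_left split_def) (rule sum.swap)
  also have "\<dots> = 1 / (real N * (real N - 1)) * (\<Sum>ct\<in>pairs N. 1)"
    by (intro arg_cong2[where f = "(*)"] refl sum.cong) (auto intro!: ctN.stoch_ct[OF pairs_ctN] q)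
  also have "\<dots> = 1"
    using N by (simp add: card_pairs of_nat_diff)
  finally show ?thesis .
qed

theorem mainTheorem3:
  fixes N :: nat and \<mu> :: "mat2 measure" and \<psi>0 :: state
  assumes "N \<ge> 2" and "is_haar \<mu>" and "normalized N \<psi>0"
  shows "(\<forall>n. (\<forall>p\<in>paulis N. Exi2 N \<mu> \<psi>0 n p \<ge> 0) \<and> (\<Sum>p\<in>paulis N. Exi2 N \<mu> \<psi>0 n p) = 1)
       \<and> (\<forall>n. \<forall>p\<in>paulis N. Exi2 N \<mu> \<psi>0 (Suc n) p = (\<Sum>q\<in>paulis N. Ptrans N q p * Exi2 N \<mu> \<psi>0 n q))
       \<and> (\<forall>\<psi> c t p. normalized N \<psi> \<longrightarrow> (c, t) \<in> pairs N \<longrightarrow> p \<in> paulis N \<longrightarrow>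
            (\<integral>U. (\<integral>V. (xi N p (mat_vec N (gate_op N c t U V) \<psi>))\<^sup>2 \<partial>\<mu>) \<partial>\<mu>)
              = (\<Sum>q\<in>paulis N. Pct N c t q p * (xi N q \<psi>)\<^sup>2))"
proof -
  interpret circ N \<mu> \<psi>0 using assms(1,2) by unfold_locales
  have P2: "\<forall>n. \<forall>p\<in>paulis N. Exi2 N \<mu> \<psi>0 (Suc n) p = (\<Sum>q\<in>paulis N. Ptrans N q p * Exi2 N \<mu> \<psi>0 n q)"
    using part2 by blast
  have S: "(\<Sum>p\<in>paulis N. Exi2 N \<mu> \<psi>0 n p) = 1" for n
  proof (induction n)
    case 0
    show ?case unfolding Exi2_0 by (rule base_sum[OF assms(3)])
  next
    case (Suc n)
    have "(\<Sum>p\<in>paulis N. Exi2 N \<mu> \<psi>0 (Suc n) p) = (\<Sum>p\<in>paulis N. \<Sum>q\<in>paulis N. Ptrans N q p * Exi2 N \<mu> \<psi>0 n q)"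
      by (intro sum.cong refl) (simp add: part2)
    also have "\<dots> = (\<Sum>q\<in>paulis N. (\<Sum>p\<in>paulis N. Ptrans N q p) * Exi2 N \<mu> \<psi>0 n q)"
      by (subst sum.swap) (simp add: sum_distrib_right)
    also have "\<dots> = (\<Sum>q\<in>paulis N. Exi2 N \<mu> \<psi>0 n q)"
      by (intro sum.cong refl) (simp add: stoch[OF assms(1)])
    finally show ?case using Suc.IH by simp
  qed
  have P1: "\<forall>n. (\<forall>p\<in>paulis N. Exi2 N \<mu> \<psi>0 n p \<ge> 0) \<and> (\<Sum>p\<in>paulis N. Exi2 N \<mu> \<psi>0 n p) = 1"
    using S Exi2_nonneg by blast
  have P3: "\<forall>\<psi> c t p. normalized N \<psi> \<longrightarrow> (c, t) \<in> pairs N \<longrightarrow> p \<in> paulis N \<longrightarrow>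
            (\<integral>U. (\<integral>V. (xi N p (mat_vec N (gate_op N c t U V) \<psi>))\<^sup>2 \<partial>\<mu>) \<partial>\<mu>)
              = (\<Sum>q\<in>paulis N. Pct N c t q p * (xi N q \<psi>)\<^sup>2)"
  proof (intro allI impI)
    fix \<psi> c t p assume ct: "(c, t) \<in> pairs N" and p: "p \<in> paulis N"
    interpret p3 N c t \<mu> by (intro p3.intro pairs_ctN ct haar_axioms)
    show "(\<integral>U. (\<integral>V. (xi N p (mat_vec N (gate_op N c t U V) \<psi>))\<^sup>2 \<partial>\<mu>) \<partial>\<mu>)
              = (\<Sum>q\<in>paulis N. Pct N c t q p * (xi N q \<psi>)\<^sup>2)" by (rule part3[OF p])
  qed
  show ?thesis using P1 P2 P3 by blast
qed


end
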